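(* Let $n\ge2$, $\alpha,\beta>0$, $\alpha^2+\beta^2=1$, $r=\alpha/\beta\in(0,1)$, $\boldsymbol\gamma=(\gamma_1,\dots,\gamma_n)\in[0,1)^n$, and $\rho_{\boldsymbol\gamma}=\bigl(\bigotimes_{i=1}^n\mathcal E_{\gamma_i}\bigr)(|\psi_n\rangle\langle\psi_n|)$ with $|\psi_n\rangle=\alpha|0^n\rangle+\beta|1^n\rangle$. Then the entries $p_{\mathbf0}=\langle0^n|\rho_{\boldsymbol\gamma}|0^n\rangle$, $p_{\mathbf1}=\langle1^n|\rho_{\boldsymbol\gamma}|1^n\rangle$, $c=\langle0^n|\rho_{\boldsymbol\gamma}|1^n\rangle$ are $$p_{\mathbf0}=\alpha^2+\beta^2\prod_i\gamma_i,\quad p_{\mathbf1}=\beta^2\prod_i(1-\gamma_i),\quad c=\alpha\beta\sqrt{\textstyle\prod_i(1-\gamma_i)},$$ and $\rho_{\boldsymbol\gamma}\in\mathcal S$ iff $p_{\mathbf0}\ge c$ and $p_{\mathbf1}\ge c$. The facet equation $p_{\mathbf1}=c$ holds iff $\prod_i(1-\gamma_i)=r^2$, and on this set $p_{\mathbf0}\ge c$ holds automatically. For every bipartition $A|B$ into nonempty parts, the $2\times2$ block of $\rho_{\boldsymbol\gamma}^{T_A}$ on $\mathrm{span}\{|1^A0^B\rangle,|0^A1^B\rangle\}$ has determinant $\beta^2\prod_i(1-\gamma_i)\bigl(\beta^2\prod_i\gamma_i-\alpha^2\bigr)$, independent of the cut, so the negativity across every bipartition vanishes if and only if $\prod_i\gamma_i\ge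 r^2$, with the death surface $\prod_i\gamma_i=r^2$. The involution $\gamma_i\mapsto1-\gamma_i$ exchanges the surfaces $\prod_i\gamma_i=r^2$ and $\prod_i(1-\gamma_i)=r^2$; equivalently, with $\bar\gamma_e=(\prod_i\gamma_i)^{1/n}$ and $\bar\gamma_+=1-(\prod_i(1-\gamma_i))^{1/n}$, the death surface is $\bar\gamma_e=r^{2/n}$ and the rebirth surface is $\bar\gamma_+=1-r^{2/n}$, and these values sum to one.
   Context: $\mathcal E_{\gamma_i}$ is single-qubit amplitude damping with Kraus operators $|0\rangle\langle0|+\sqrt{1-\gamma_i}|1\rangle\langle1|$ and $\sqrt{\gamma_i}|0\rangle\langle1|$, applied to qubit $i$. $\mathcal S$ is the $n$-qubit stabilizer polytope (convex hull of pure stabilizer states $C|0^n\rangle$, $C$ Clifford). $T_A$ is partial transposition on subsystem $A$; negativity is $(\|\rho^{T_A}\|_1-1)/2$. *)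

theory Defs
  imports Complex_Main
begin

text \<open>Computational basis states are labelled by subsets x of {..<n}
  (x = set of qubits in state 1). Operators are matrices indexed by such labels; only
  entries with both labels in basis n are meaningful.\<close>

type_synonym qmat = "nat set \<Rightarrow> nat set \<Rightarrow> complex"
type_synonym qvec = "nat set \<Rightarrow> complex"
type_synonym qubit_op = "bool \<Rightarrow> bool \<Rightarrow> complex"

definition basis :: "nat \<Rightarrow> nat set set" where
  "basis n = Pow {..<n}"

definition meq :: "nat \<Rightarrow> qmat \<Rightarrow> qmat \<Rightarrow> bool" where
  "meq n A B \<longleftrightarrow> (\<forall>x\<in>basis n. \<forall>y\<in>basis n. A x y = B x y)"

definition mmult :: "nat \<Rightarrow> qmat \<Rightarrow> qmat \<Rightarrow> qmat" where
  "mmult n A B = (\<lambda>x y. \<Sum>z\<in>basis n. A x z * B z y)"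

definition mulvec :: "nat \<Rightarrow> qmat \<Rightarrow> qvec \<Rightarrow> qvec" where
  "mulvec n A v = (\<lambda>x. \<Sum>y\<in>basis n. A x y * v y)"

definition adj :: "qmat \<Rightarrow> qmat" where
  "adj A = (\<lambda>x y. cnj (A y x))"

definition ident :: qmat where
  "ident = (\<lambda>x y. if x = y then 1 else 0)"

definition mtrace :: "nat \<Rightarrow> qmat \<Rightarrow> complex" where
  "mtrace n A = (\<Sum>x\<in>basis n. A x x)"

definition proj :: "qvec \<Rightarrow> qmat" where
  "proj v = (\<lambda>x y. v x * cnj (v y))"

definition tensor :: "nat \<Rightarrow> (nat \<Rightarrow> qubit_op) \<Rightarrow> qmat" where
  "tensor n M = (\<lambda>x y. \<Prod>i<n. M i (i \<in> x) (i \<in> y))"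

text \<open>Amplitude damping Kraus operators:
  K0 = |0><0| + sqrt(1-g)|1><1|,  K1 = sqrt g |0><1|  (True = |1>).\<close>
definition ad_K0 :: "real \<Rightarrow> qubit_op" where
  "ad_K0 g = (\<lambda>a b. if a = b then (if a then complex_of_real (sqrt (1 - g)) else 1) else 0)"

definition ad_K1 :: "real \<Rightarrow> qubit_op" where
  "ad_K1 g = (\<lambda>a b. if \<not> a \<and> b then complex_of_real (sqrt g) else 0)"

definition ad_kraus :: "real \<Rightarrow> bool \<Rightarrow> qubit_op" where
  "ad_kraus g k = (if k then ad_K1 g else ad_K0 g)"

text \<open>The product channel (E_{g 0} \<otimes> ... \<otimes> E_{g (n-1)}), whose Kraus operators are the
  tensor products of the single-qubit Kraus operators; k \<subseteq> {..<n} selects K1 on qubits in k.\<close>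
definition damp :: "nat \<Rightarrow> (nat \<Rightarrow> real) \<Rightarrow> qmat \<Rightarrow> qmat" where
  "damp n g \<rho> = (\<lambda>x y. \<Sum>k\<in>basis n.
      mmult n (mmult n (tensor n (\<lambda>i. ad_kraus (g i) (i \<in> k))) \<rho>)
              (adj (tensor n (\<lambda>i. ad_kraus (g i) (i \<in> k)))) x y)"

definition psi :: "nat \<Rightarrow> real \<Rightarrow> real \<Rightarrow> qvec" where
  "psi n a b = (\<lambda>x. if x = {} then complex_of_real a
                    else if x = {..<n} then complex_of_real b else 0)"

definition ket0 :: qvec where
  "ket0 = (\<lambda>x. if x = {} then 1 else 0)"

definition gate_H :: "nat \<Rightarrow> qmat" where
  "gate_H j = (\<lambda>x y. if x - {j} = y - {j}
      then (if j \<in> x \<and> j \<in> y then -1 else 1) / complex_of_real (sqrt 2) else 0)"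

definition gate_S :: "nat \<Rightarrow> qmat" where
  "gate_S j = (\<lambda>x y. if x = y then (if j \<in> x then \<i> else 1) else 0)"

definition toggle :: "nat \<Rightarrow> nat set \<Rightarrow> nat set" where
  "toggle k y = (if k \<in> y then y - {k} else insert k y)"

definition gate_CNOT :: "nat \<Rightarrow> nat \<Rightarrow> qmat" where
  "gate_CNOT j k = (\<lambda>x y. if x = (if j \<in> y then toggle k y else y) then 1 else 0)"

text \<open>The n-qubit Clifford group: generated by H, S, CNOT (global phases are irrelevant
  for the stabilizer states C|0^n>).\<close>
inductive_set clifford :: "nat \<Rightarrow> qmat set" for n :: nat where
  cl_id: "ident \<in> clifford n"
| cl_H: "C \<in> clifford n \<Longrightarrow> j < n \<Longrightarrow> mmult n (gate_H j) C \<in> clifford n"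
| cl_S: "C \<in> clifford n \<Longrightarrow> j < n \<Longrightarrow> mmult n (gate_S j) C \<in> clifford n"
| cl_CNOT: "C \<in> clifford n \<Longrightarrow> j < n \<Longrightarrow> k < n \<Longrightarrow> j \<noteq> k
            \<Longrightarrow> mmult n (gate_CNOT j k) C \<in> clifford n"

definition stab_states :: "nat \<Rightarrow> qvec set" where
  "stab_states n = {mulvec n C ket0 | C. C \<in> clifford n}"

definition stab_poly :: "nat \<Rightarrow> qmat set" where
  "stab_poly n = {\<rho>. \<exists>(I :: nat set) w s. finite I \<and> (\<forall>i\<in>I. w i \<ge> 0 \<and> s i \<in> stab_states n)
       \<and> (\<Sum>i\<in>I. w i) = 1
       \<and> meq n \<rho> (\<lambda>x y. \<Sum>i\<in>I. complex_of_real (w i) * proj (s i) x y)}"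

text \<open>Partial transposition on subsystem A:
  <a b| rho^{T_A} |a' b'> = <a' b| rho |a b'>.\<close>
definition ptrans :: "nat set \<Rightarrow> qmat \<Rightarrow> qmat" where
  "ptrans A \<rho> = (\<lambda>x y. \<rho> ((x - A) \<union> (y \<inter> A)) ((y - A) \<union> (x \<inter> A)))"

definition unitary :: "nat \<Rightarrow> qmat \<Rightarrow> bool" where
  "unitary n U \<longleftrightarrow> meq n (mmult n (adj U) U) ident"

text \<open>Trace norm via its variational form ||M||_1 = max over unitaries U of |tr(U M)|.\<close>
definition trace_norm :: "nat \<Rightarrow> qmat \<Rightarrow> real" where
  "trace_norm n M = Sup {cmod (mtrace n (mmult n U M)) | U. unitary n U}"

definition negativity :: "nat \<Rightarrow> nat set \<Rightarrow> qmat \<Rightarrow> real" where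
  "negativity n A \<rho> = (trace_norm n (ptrans A \<rho>) - 1) / 2"

end

theory Submission
  imports Defs "HOL-Library.Nat_Bijection"
begin

lemma sum_prod_pow:
  fixes f :: "nat \<Rightarrow> bool \<Rightarrow> 'a::comm_semiring_1"
  shows
  "(\<Sum>z\<in>Pow {..<(n::nat)}. \<Prod>i<n. f i (i\<in>z)) = (\<Prod>i<n. f i False + f i True)"
proof (induction n)
  case 0 then show ?case by simp
next
  case (Suc n)
  have P: "Pow {..<Suc n} = Pow {..<n} \<union> insert n ` Pow {..<n}"
    by (simp add: lessThan_Suc Pow_insert)
  have disj: "Pow {..<n} \<inter> insert n ` Pow {..<n} = {}" by auto
  have inj: "inj_on (insert n) (Pow {..<n})"
    by (rule inj_onI) (metis Pow_iff insert_ident lessThan_iff order_less_irrefl subsetD)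
  have A: "(\<Prod>i<Suc n. f i (i\<in>z)) = f n False * (\<Prod>i<n. f i (i\<in>z))" if "z \<in> Pow {..<n}" for z
  proof -
    have "n \<notin> z" using that by auto
    then show ?thesis by (simp add: lessThan_Suc)
  qed
  have B: "(\<Prod>i<Suc n. f i (i\<in>insert n z)) = f n True * (\<Prod>i<n. f i (i\<in>z))" for z
  proof -
    have "(\<Prod>i<n. f i (i\<in>insert n z)) = (\<Prod>i<n. f i (i\<in>z))"
      by (rule prod.cong) auto
    then show ?thesis by (simp add: lessThan_Suc)
  qed
  have "(\<Sum>z\<in>Pow {..<Suc n}. \<Prod>i<Suc n. f i (i\<in>z))
      = (\<Sum>z\<in>Pow {..<n}. \<Prod>i<Suc n. f i (i\<in>z)) + (\<Sum>z\<in>insert n ` Pow {..<n}. \<Prod>i<Suc n. f i (i\<in>z))"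
    unfolding P by (rule sum.union_disjoint) (use disj in auto)
  also have "\<dots> = f n False * (\<Sum>z\<in>Pow {..<n}. \<Prod>i<n. f i (i\<in>z)) + f n True * (\<Sum>z\<in>Pow {..<n}. \<Prod>i<n. f i (i\<in>z))"
    by (simp only: sum.reindex[OF inj] o_def A B cong: sum.cong) (simp add: sum_distrib_left)
  also have "\<dots> = (\<Prod>i<Suc n. f i False + f i True)"
    using Suc by (simp add: algebra_simps)
  finally show ?case .
qed

lemma finite_basis[simp]: "finite (basis n)"
  by (simp add: basis_def)

lemma prod_if_zero:
  "(\<Prod>i\<in>S. if P i then f i else (0::'a::comm_semiring_1)) = (if \<forall>i\<in>S. P i then \<Prod>i\<in>S. f i else 0)"
  if "finite S"
proof (cases "\<forall>i\<in>S. P i")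
  case True then show ?thesis by (auto intro: prod.cong)
next
  case False
  then obtain j where "j \<in> S" "\<not> P j" by auto
  then show ?thesis using that by (auto intro!: prod_zero)
qed

lemma sqrt_prod: "(\<Prod>i\<in>S. sqrt (f i)) = sqrt (\<Prod>i\<in>S. f i)"
  by (induction S rule: infinite_finite_induct) (auto simp: real_sqrt_mult)

lemma mmult_proj:
  "mmult n (mmult n K (proj v)) (adj K) x y = mulvec n K v x * cnj (mulvec n K v y)"
proof -
  have "mmult n (mmult n K (proj v)) (adj K) x y
      = (\<Sum>w\<in>basis n. (\<Sum>z\<in>basis n. K x z * v z) * (cnj (v w) * cnj (K y w)))"
    unfolding mmult_def proj_def adj_def
    by (rule sum.cong[OF refl]) (simp add: sum_distrib_right mult.assoc)
  also have "\<dots> = mulvec n K v x * cnj (mulvec n K v y)"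
    unfolding mulvec_def by (simp add: sum_distrib_left mult.commute)
  finally show ?thesis .
qed

lemma mulvec_psi:
  assumes "n \<ge> 1"
  shows "mulvec n M (psi n a b) x = M x {} * a + M x {..<n} * b"
proof -
  have "0 \<in> {..<n}" using assms by simp
  then have ne: "{} \<noteq> {..<n}" by blast
  have "mulvec n M (psi n a b) x = (\<Sum>z\<in>basis n. (if z = {} then M x z * a else 0) + (if z = {..<n} then M x z * b else 0))"
    unfolding mulvec_def psi_def by (rule sum.cong) (use ne in auto)
  also have "\<dots> = M x {} * a + M x {..<n} * b"
    by (simp add: sum.distrib basis_def)
  finally show ?thesis .
qed

lemma K_zero:
  assumes "x \<in> basis n" "k \<in> basis n"
  shows "tensor n (\<lambda>i. ad_kraus (g i) (i\<in>k)) x {} = (if k = {} \<and> x = {} then 1 else 0)"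
proof -
  have "tensor n (\<lambda>i. ad_kraus (g i) (i\<in>k)) x {} = (\<Prod>i<n. if i \<notin> k \<and> i \<notin> x then 1 else 0)"
    unfolding tensor_def by (rule prod.cong) (auto simp: ad_kraus_def ad_K0_def ad_K1_def)
  also have "\<dots> = (if k = {} \<and> x = {} then 1 else 0)"
    using assms by (subst prod_if_zero) (auto simp: basis_def)
  finally show ?thesis .
qed

definition mm :: "nat \<Rightarrow> (nat \<Rightarrow> real) \<Rightarrow> nat set \<Rightarrow> real" where
  "mm n g x = (\<Prod>i<n. if i \<in> x then sqrt (1 - g i) else sqrt (g i))"

lemma K_all:
  assumes "x \<in> basis n" "k \<in> basis n"
  shows "tensor n (\<lambda>i. ad_kraus (g i) (i\<in>k)) x {..<n} = (if k = {..<n} - x then complex_of_real (mm n g x) else 0)"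
proof -
  have "tensor n (\<lambda>i. ad_kraus (g i) (i\<in>k)) x {..<n}
     = (\<Prod>i<n. if (i \<in> k \<longleftrightarrow> i \<notin> x) then complex_of_real (if i \<in> x then sqrt (1 - g i) else sqrt (g i)) else 0)"
    unfolding tensor_def by (rule prod.cong) (auto simp: ad_kraus_def ad_K0_def ad_K1_def)
  also have "\<dots> = (if k = {..<n} - x then complex_of_real (mm n g x) else 0)"
    using assms by (subst prod_if_zero) (auto simp: basis_def mm_def)
  finally show ?thesis .
qed

definition pr :: "nat \<Rightarrow> (nat \<Rightarrow> real) \<Rightarrow> nat set \<Rightarrow> real" where
  "pr n g x = (\<Prod>i<n. if i \<in> x then 1 - g i else g i)"

definition rf :: "nat \<Rightarrow> real \<Rightarrow> real \<Rightarrow> (nat \<Rightarrow> real) \<Rightarrow> nat set \<Rightarrow> nat set \<Rightarrow> real" where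
  "rf n a b g x y = (if x = y then b\<^sup>2 * pr n g x + (if x = {} then a\<^sup>2 else 0) else 0)
     + (if (x = {} \<and> y = {..<n}) \<or> (x = {..<n} \<and> y = {}) then a * b * mm n g {..<n} else 0)"

lemma mm_sq:
  assumes "\<forall>i<n. 0 \<le> g i \<and> g i \<le> 1"
  shows "mm n g x * mm n g x = pr n g x"
  unfolding mm_def pr_def prod.distrib[symmetric]
  by (rule prod.cong) (use assms in auto)

lemma mm_all:
  "mm n g {..<n} = sqrt (\<Prod>i<n. 1 - g i)"
  unfolding mm_def sqrt_prod[symmetric] by (rule prod.cong) auto

lemma rho_formula:
  assumes n1: "n \<ge> 1" and g: "\<forall>i<n. 0 \<le> g i \<and> g i \<le> 1"
    and xy: "x \<in> basis n" "y \<in> basis n"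
  shows "damp n g (proj (psi n a b)) x y = complex_of_real (rf n a b g x y)"
proof -
  have "0 \<in> {..<n}" using n1 by simp
  then have ne: "{} \<noteq> {..<n}" by blast
  define u where "u k z = (if k = {} \<and> z = {} then complex_of_real a else 0)
     + (if k = {..<n} - z then complex_of_real (mm n g z * b) else 0)" for k z
  have u: "mulvec n (tensor n (\<lambda>i. ad_kraus (g i) (i\<in>k))) (psi n a b) z = u k z"
    if "k \<in> basis n" "z \<in> basis n" for k z
    unfolding mulvec_psi[OF n1] K_zero[OF that(2,1)] K_all[OF that(2,1)] u_def
    using ne by (cases "k = {..<n} - z"; cases "k = {} \<and> z = {}") auto
  have "damp n g (proj (psi n a b)) x y = (\<Sum>k\<in>basis n. u k x * cnj (u k y))"
    unfolding damp_def mmult_proj using xy u by (intro sum.cong) auto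
  also have "\<dots> = (\<Sum>k\<in>basis n. (if k = {} then (if x = {} \<and> y = {} then complex_of_real (a*a) else 0) else 0)
        + (if k = {} then (if x = {} \<and> y = {..<n} then complex_of_real (a * b * mm n g {..<n}) else 0) else 0)
        + (if k = {} then (if x = {..<n} \<and> y = {} then complex_of_real (a * b * mm n g {..<n}) else 0) else 0)
        + (if k = {..<n} - x then (if x = y then complex_of_real (b * b * (mm n g x * mm n g x)) else 0) else 0))"
  proof (intro sum.cong refl)
    fix k assume k: "k \<in> basis n"
    have e1: "({..<n} - y = {}) = (y = {..<n})" "({..<n} - x = {}) = (x = {..<n})"
      using xy by (auto simp: basis_def)
    have e2: "({..<n} - x = {..<n} - y) = (x = y)"
      using xy by (auto simp: basis_def)
    show "u k x * cnj (u k y) = (if k = {} then (if x = {} \<and> y = {} then complex_of_real (a*a) else 0) else 0)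
        + (if k = {} then (if x = {} \<and> y = {..<n} then complex_of_real (a * b * mm n g {..<n}) else 0) else 0)
        + (if k = {} then (if x = {..<n} \<and> y = {} then complex_of_real (a * b * mm n g {..<n}) else 0) else 0)
        + (if k = {..<n} - x then (if x = y then complex_of_real (b * b * (mm n g x * mm n g x)) else 0) else 0)"
      unfolding u_def
      apply (cases "k = {}"; cases "k = {..<n} - x"; cases "k = {..<n} - y")
      using ne e1 e2 by (auto simp: algebra_simps)
  qed
  also have "\<dots> = complex_of_real (rf n a b g x y)"
  proof -
    have "{..<n} - x \<in> basis n" by (simp add: basis_def)
    moreover have "{} \<in> basis n" by (simp add: basis_def)
    ultimately have "(\<Sum>k\<in>basis n. (if k = {} then (if x = {} \<and> y = {} then complex_of_real (a*a) else 0) else 0)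
        + (if k = {} then (if x = {} \<and> y = {..<n} then complex_of_real (a * b * mm n g {..<n}) else 0) else 0)
        + (if k = {} then (if x = {..<n} \<and> y = {} then complex_of_real (a * b * mm n g {..<n}) else 0) else 0)
        + (if k = {..<n} - x then (if x = y then complex_of_real (b * b * (mm n g x * mm n g x)) else 0) else 0))
       = (if x = {} \<and> y = {} then complex_of_real (a*a) else 0)
        + (if x = {} \<and> y = {..<n} then complex_of_real (a * b * mm n g {..<n}) else 0)
        + (if x = {..<n} \<and> y = {} then complex_of_real (a * b * mm n g {..<n}) else 0)
        + (if x = y then complex_of_real (b * b * (mm n g x * mm n g x)) else 0)"
      by (simp add: sum.distrib)
    also have "\<dots> = complex_of_real (rf n a b g x y)"
      using ne by (cases "x = y"; cases "x = {}"; cases "y = {}"; cases "x = {..<n}"; cases "y = {..<n}")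
        (simp_all add: rf_def mm_sq[OF g] power2_eq_square)
    finally show ?thesis .
  qed
  finally show ?thesis .
qed

lemma sum4: "(\<Sum>x\<in>A. \<Sum>y\<in>A. \<Sum>x'\<in>A. \<Sum>y'\<in>A. (f x y x' y' :: complex)) = (\<Sum>x'\<in>A. \<Sum>y'\<in>A. \<Sum>y\<in>A. \<Sum>x\<in>A. f x y x' y')"
proof -
  have "(\<Sum>x\<in>A. \<Sum>y\<in>A. \<Sum>x'\<in>A. \<Sum>y'\<in>A. f x y x' y') = (\<Sum>x\<in>A. \<Sum>x'\<in>A. \<Sum>y\<in>A. \<Sum>y'\<in>A. f x y x' y')"
    by (rule sum.cong[OF refl], rule sum.swap)
  also have "\<dots> = (\<Sum>x'\<in>A. \<Sum>x\<in>A. \<Sum>y\<in>A. \<Sum>y'\<in>A. f x y x' y')" by (rule sum.swap)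
  also have "\<dots> = (\<Sum>x'\<in>A. \<Sum>x\<in>A. \<Sum>y'\<in>A. \<Sum>y\<in>A. f x y x' y')"
    by (rule sum.cong[OF refl], rule sum.cong[OF refl], rule sum.swap)
  also have "\<dots> = (\<Sum>x'\<in>A. \<Sum>y'\<in>A. \<Sum>x\<in>A. \<Sum>y\<in>A. f x y x' y')"
    by (rule sum.cong[OF refl], rule sum.swap)
  also have "\<dots> = (\<Sum>x'\<in>A. \<Sum>y'\<in>A. \<Sum>y\<in>A. \<Sum>x\<in>A. f x y x' y')"
    by (rule sum.cong[OF refl], rule sum.cong[OF refl], rule sum.swap)
  finally show ?thesis .
qed

definition expv :: "nat \<Rightarrow> qvec \<Rightarrow> qmat \<Rightarrow> complex" where
  "expv n v M = (\<Sum>x\<in>basis n. \<Sum>y\<in>basis n. cnj (v x) * M x y * v y)"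

lemma expv_mulvec:
  "expv n (mulvec n G v) M = expv n v (mmult n (mmult n (adj G) M) G)"
proof -
  have "expv n (mulvec n G v) M =
     (\<Sum>x\<in>basis n. \<Sum>y\<in>basis n. \<Sum>x'\<in>basis n. \<Sum>y'\<in>basis n. cnj (v x') * (cnj (G x x') * M x y * G y y') * v y')"
    unfolding expv_def mulvec_def
    by (simp add: sum_distrib_left sum_distrib_right mult_ac)
  also have "\<dots> = (\<Sum>x'\<in>basis n. \<Sum>y'\<in>basis n. \<Sum>y\<in>basis n. \<Sum>x\<in>basis n. cnj (v x') * (cnj (G x x') * M x y * G y y') * v y')"
    by (rule sum4)
  also have "\<dots> = expv n v (mmult n (mmult n (adj G) M) G)"
    unfolding expv_def mmult_def adj_def
    by (simp add: sum_distrib_left sum_distrib_right mult_ac)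
  finally show ?thesis .
qed

lemma expv_cong:
  assumes "\<forall>x\<in>basis n. v x = w x" "\<forall>x\<in>basis n. \<forall>y\<in>basis n. M x y = N x y"
  shows "expv n v M = expv n w N"
  unfolding expv_def using assms by (intro sum.cong) auto

lemma mulvec_mmult: "mulvec n (mmult n A B) v = mulvec n A (mulvec n B v)"
proof (rule ext)
  fix x
  have "mulvec n (mmult n A B) v x = (\<Sum>y\<in>basis n. \<Sum>z\<in>basis n. A x z * B z y * v y)"
    unfolding mulvec_def mmult_def by (simp add: sum_distrib_right)
  also have "\<dots> = (\<Sum>z\<in>basis n. \<Sum>y\<in>basis n. A x z * B z y * v y)"
    by (rule sum.swap)
  also have "\<dots> = mulvec n A (mulvec n B v) x"
    unfolding mulvec_def by (simp add: sum_distrib_left mult.assoc)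
  finally show "mulvec n (mmult n A B) v x = mulvec n A (mulvec n B v) x" .
qed

definition mult1 :: "qubit_op \<Rightarrow> qubit_op \<Rightarrow> qubit_op" where
  "mult1 A B = (\<lambda>u w. A u False * B False w + A u True * B True w)"

definition adj1 :: "qubit_op \<Rightarrow> qubit_op" where
  "adj1 A = (\<lambda>u w. cnj (A w u))"

lemma mmult_tensor: "mmult n (tensor n A) (tensor n B) = tensor n (\<lambda>i. mult1 (A i) (B i))"
proof (intro ext)
  fix x y
  have "mmult n (tensor n A) (tensor n B) x y = (\<Sum>z\<in>Pow {..<n}. \<Prod>i<n. A i (i\<in>x) (i\<in>z) * B i (i\<in>z) (i\<in>y))"
    unfolding mmult_def tensor_def basis_def by (simp add: prod.distrib)
  also have "\<dots> = tensor n (\<lambda>i. mult1 (A i) (B i)) x y"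
    by (subst sum_prod_pow[where f = "\<lambda>i c. A i (i\<in>x) c * B i c (i\<in>y)"]) (simp add: tensor_def mult1_def)
  finally show "mmult n (tensor n A) (tensor n B) x y = tensor n (\<lambda>i. mult1 (A i) (B i)) x y" .
qed

lemma adj_tensor: "adj (tensor n A) = tensor n (\<lambda>i. adj1 (A i))"
  unfolding adj_def tensor_def adj1_def by simp

definition pauli1 :: "bool \<Rightarrow> bool \<Rightarrow> qubit_op" where
  "pauli1 xa zb = (\<lambda>u w. if u = (w \<noteq> xa) then (if zb \<and> w then -1 else 1) else 0)"

definition PP :: "nat \<Rightarrow> nat set \<Rightarrow> nat set \<Rightarrow> qmat" where
  "PP n a b = tensor n (\<lambda>i. pauli1 (i\<in>a) (i\<in>b))"

definition EE :: "nat \<Rightarrow> qvec \<Rightarrow> nat set \<Rightarrow> nat set \<Rightarrow> complex" where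
  "EE n v a b = expv n v (PP n a b)"

definition Inv :: "nat \<Rightarrow> qvec \<Rightarrow> bool" where
  "Inv n v \<longleftrightarrow> EE n v {} {} = 1 \<and> (\<forall>a b. EE n v a b = 0 \<or> cmod (EE n v a b) = 1)"

lemma tensor_pull:
  assumes "j < n"
  shows "tensor n (\<lambda>i. if i = j then (\<lambda>u w. c * F i u w) else F i) = (\<lambda>x y. c * tensor n F x y)"
proof (intro ext)
  fix x y
  have f: "finite {..<n}" by simp
  have jn: "j \<in> {..<n}" using assms by simp
  show "tensor n (\<lambda>i. if i = j then (\<lambda>u w. c * F i u w) else F i) x y = c * tensor n F x y"
  proof -
    have "(\<Prod>i\<in>{..<n}-{j}. (if i = j then (\<lambda>u w. c * F i u w) else F i) (i\<in>x) (i\<in>y)) = (\<Prod>i\<in>{..<n}-{j}. F i (i\<in>x) (i\<in>y))"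
      by (rule prod.cong) auto
    then show ?thesis unfolding tensor_def by (simp add: prod.remove[OF f jn])
  qed
qed

definition idq :: qubit_op where "idq = (\<lambda>u w. if u = w then 1 else 0)"

lemma conj_idq: "mult1 (mult1 (adj1 idq) P) idq = P"
  by (intro ext) (simp add: mult1_def adj1_def idq_def)

lemma conj_single:
  assumes "j < n"
    and g: "mult1 (mult1 (adj1 g) (pauli1 (j\<in>a) (j\<in>b))) g = (\<lambda>u w. c * pauli1 \<alpha> \<beta> u w)"
  shows "mmult n (mmult n (adj (tensor n (\<lambda>i. if i = j then g else idq))) (PP n a b)) (tensor n (\<lambda>i. if i = j then g else idq))
     = (\<lambda>x y. c * PP n (if \<alpha> then insert j a else a - {j}) (if \<beta> then insert j b else b - {j}) x y)"
proof -
  have "mmult n (mmult n (adj (tensor n (\<lambda>i. if i = j then g else idq))) (PP n a b)) (tensor n (\<lambda>i. if i = j then g else idq))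
     = tensor n (\<lambda>i. if i = j then (\<lambda>u w. c * pauli1 (i \<in> (if \<alpha> then insert j a else a - {j})) (i \<in> (if \<beta> then insert j b else b - {j})) u w)
           else pauli1 (i \<in> (if \<alpha> then insert j a else a - {j})) (i \<in> (if \<beta> then insert j b else b - {j})))"
    unfolding PP_def adj_tensor mmult_tensor
    by (rule arg_cong[where f = "tensor n"]) (use g in \<open>auto simp: conj_idq\<close>)
  then show ?thesis unfolding tensor_pull[OF assms(1)] PP_def by simp
qed

definition hq :: qubit_op where
  "hq = (\<lambda>u w. (if u \<and> w then -1 else 1) / complex_of_real (sqrt 2))"
definition sq :: qubit_op where
  "sq = (\<lambda>u w. if u = w then (if u then \<i> else 1) else 0)"

lemma tensor_single:
  assumes "j < n" "x \<in> basis n" "y \<in> basis n"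
  shows "tensor n (\<lambda>i. if i = j then g else idq) x y = g (j\<in>x) (j\<in>y) * (if x - {j} = y - {j} then 1 else 0)"
proof -
  have f: "finite {..<n}" by simp
  have jn: "j \<in> {..<n}" using assms by simp
  have "(\<Prod>i\<in>{..<n}-{j}. (if i = j then g else idq) (i\<in>x) (i\<in>y)) = (\<Prod>i\<in>{..<n}-{j}. if (i\<in>x \<longleftrightarrow> i\<in>y) then 1 else 0)"
    by (rule prod.cong) (auto simp: idq_def)
  also have "\<dots> = (if x - {j} = y - {j} then 1 else 0)"
    using assms(2,3) by (subst prod_if_zero) (auto simp: basis_def)
  finally show ?thesis unfolding tensor_def by (simp add: prod.remove[OF f jn])
qed

lemma H_tensor:
  assumes "j < n" "x \<in> basis n" "y \<in> basis n"
  shows "gate_H j x y = tensor n (\<lambda>i. if i = j then hq else idq) x y"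
  unfolding tensor_single[OF assms] by (simp add: gate_H_def hq_def)

lemma S_tensor:
  assumes "j < n" "x \<in> basis n" "y \<in> basis n"
  shows "gate_S j x y = tensor n (\<lambda>i. if i = j then sq else idq) x y"
  unfolding tensor_single[OF assms] by (auto simp: gate_S_def sq_def)

lemma sqrt2c: "complex_of_real (sqrt 2) * complex_of_real (sqrt 2) = 2"
proof -
  have "sqrt 2 * sqrt 2 = (2::real)" by simp
  then have "complex_of_real (sqrt 2 * sqrt 2) = 2" by simp
  then show ?thesis by (simp only: of_real_mult)
qed

lemma conj_hq: "mult1 (mult1 (adj1 hq) (pauli1 \<alpha> \<beta>)) hq = (\<lambda>u w. (if \<alpha> \<and> \<beta> then -1 else 1) * pauli1 \<beta> \<alpha> u w)"
proof (intro ext)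
  fix u w
  show "mult1 (mult1 (adj1 hq) (pauli1 \<alpha> \<beta>)) hq u w = (if \<alpha> \<and> \<beta> then -1 else 1) * pauli1 \<beta> \<alpha> u w"
    by (cases \<alpha>; cases \<beta>; cases u; cases w) (simp_all add: mult1_def adj1_def hq_def pauli1_def field_simps sqrt2c)
qed

lemma conj_sq: "mult1 (mult1 (adj1 sq) (pauli1 \<alpha> \<beta>)) sq = (\<lambda>u w. (if \<alpha> then -\<i> else 1) * pauli1 \<alpha> (\<beta> \<noteq> \<alpha>) u w)"
proof (intro ext)
  fix u w
  show "mult1 (mult1 (adj1 sq) (pauli1 \<alpha> \<beta>)) sq u w = (if \<alpha> then -\<i> else 1) * pauli1 \<alpha> (\<beta> \<noteq> \<alpha>) u w"
    by (cases \<alpha>; cases \<beta>; cases u; cases w) (simp_all add: mult1_def adj1_def sq_def pauli1_def)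
qed

lemma expv_scale: "expv n v (\<lambda>x y. c * M x y) = c * expv n v M"
  unfolding expv_def by (simp add: sum_distrib_left mult_ac)

lemma Inv_step:
  assumes "Inv n v"
    and "\<And>a b. \<exists>a' b' c. cmod c = 1 \<and> EE n w a b = c * EE n v a' b'"
    and "EE n w {} {} = EE n v {} {}"
  shows "Inv n w"
  unfolding Inv_def
proof (intro conjI allI)
  show "EE n w {} {} = 1" using assms(1,3) by (simp add: Inv_def)
next
  fix a b
  obtain a' b' c where "cmod c = 1" "EE n w a b = c * EE n v a' b'" using assms(2) by blast
  moreover have "EE n v a' b' = 0 \<or> cmod (EE n v a' b') = 1" using assms(1) by (simp add: Inv_def)
  ultimately show "EE n w a b = 0 \<or> cmod (EE n w a b) = 1" by (auto simp: norm_mult)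
qed

lemma Inv_single:
  assumes inv: "Inv n v" and j: "j < n"
    and G: "\<forall>x\<in>basis n. \<forall>y\<in>basis n. G x y = tensor n (\<lambda>i. if i = j then g else idq) x y"
    and cg: "\<And>\<alpha> \<beta>. \<exists>c \<alpha>' \<beta>'. cmod c = 1 \<and> mult1 (mult1 (adj1 g) (pauli1 \<alpha> \<beta>)) g = (\<lambda>u w. c * pauli1 \<alpha>' \<beta>' u w)"
    and c0: "mult1 (mult1 (adj1 g) (pauli1 False False)) g = pauli1 False False"
  shows "Inv n (mulvec n G v)"
proof -
  let ?T = "tensor n (\<lambda>i. if i = j then g else idq)"
  have eq: "EE n (mulvec n G v) a b = expv n v (mmult n (mmult n (adj ?T) (PP n a b)) ?T)" for a b
  proof -
    have "EE n (mulvec n G v) a b = EE n (mulvec n ?T v) a b"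
      unfolding EE_def using G by (intro expv_cong) (auto simp: mulvec_def intro!: sum.cong)
    then show ?thesis by (simp add: EE_def expv_mulvec)
  qed
  show ?thesis
  proof (rule Inv_step[OF inv])
    fix a b
    obtain c \<alpha>' \<beta>' where c: "cmod c = 1" and e: "mult1 (mult1 (adj1 g) (pauli1 (j\<in>a) (j\<in>b))) g = (\<lambda>u w. c * pauli1 \<alpha>' \<beta>' u w)"
      using cg by blast
    have "EE n (mulvec n G v) a b = c * EE n v (if \<alpha>' then insert j a else a - {j}) (if \<beta>' then insert j b else b - {j})"
      using eq[of a b] unfolding conj_single[OF j e] expv_scale EE_def by simp
    then show "\<exists>a' b' c. cmod c = 1 \<and> EE n (mulvec n G v) a b = c * EE n v a' b'"
      using c by blast
  next
    have e: "mult1 (mult1 (adj1 g) (pauli1 (j\<in>{}) (j\<in>{}))) g = (\<lambda>u w. 1 * pauli1 False False u w)"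
      using c0 by simp
    show "EE n (mulvec n G v) {} {} = EE n v {} {}"
      using eq[of "{}" "{}"] unfolding conj_single[OF j e] expv_scale EE_def by simp
  qed
qed

lemma Inv_H: "Inv n v \<Longrightarrow> j < n \<Longrightarrow> Inv n (mulvec n (gate_H j) v)"
proof (rule Inv_single[where g = hq and j = j])
  fix \<alpha> \<beta>
  show "\<exists>c \<alpha>' \<beta>'. cmod c = 1 \<and> mult1 (mult1 (adj1 hq) (pauli1 \<alpha> \<beta>)) hq = (\<lambda>u w. c * pauli1 \<alpha>' \<beta>' u w)"
    by (rule exI[of _ "if \<alpha> \<and> \<beta> then -1 else 1"], rule exI[of _ \<beta>], rule exI[of _ \<alpha>]) (simp add: conj_hq)
qed (use H_tensor conj_hq in auto)

lemma Inv_S: "Inv n v \<Longrightarrow> j < n \<Longrightarrow> Inv n (mulvec n (gate_S j) v)"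
proof (rule Inv_single[where g = sq and j = j])
  fix \<alpha> \<beta>
  show "\<exists>c \<alpha>' \<beta>'. cmod c = 1 \<and> mult1 (mult1 (adj1 sq) (pauli1 \<alpha> \<beta>)) sq = (\<lambda>u w. c * pauli1 \<alpha>' \<beta>' u w)"
    by (rule exI[of _ "if \<alpha> then -\<i> else 1"], rule exI[of _ \<alpha>], rule exI[of _ "\<beta> \<noteq> \<alpha>"]) (simp add: conj_sq)
qed (use S_tensor conj_sq in auto)

definition cpi :: "nat \<Rightarrow> nat \<Rightarrow> nat set \<Rightarrow> nat set" where
  "cpi j k y = (if j \<in> y then toggle k y else y)"

lemma cpi_mem: "j \<noteq> k \<Longrightarrow> i \<in> cpi j k y \<longleftrightarrow> (if i = k then ((k \<in> y) \<noteq> (j \<in> y)) else i \<in> y)"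
  unfolding cpi_def toggle_def by auto

lemma cpi_inv: "j \<noteq> k \<Longrightarrow> cpi j k (cpi j k y) = y"
  by (rule set_eqI) (cases "k \<in> y"; cases "j \<in> y"; simp add: cpi_mem)

lemma cpi_basis: "k < n \<Longrightarrow> y \<in> basis n \<Longrightarrow> cpi j k y \<in> basis n"
  unfolding cpi_def toggle_def basis_def by auto

lemma cpi_bij: "j \<noteq> k \<Longrightarrow> k < n \<Longrightarrow> bij_betw (cpi j k) (basis n) (basis n)"
  by (rule bij_betw_byWitness[where f' = "cpi j k"]) (auto simp: cpi_inv cpi_basis)

lemma sum_cpi:
  assumes "j \<noteq> k" "k < n"
  shows "(\<Sum>y\<in>basis n. g (cpi j k y)) = (\<Sum>y\<in>basis n. g y)"
  by (rule sum.reindex_bij_betw[OF cpi_bij[OF assms]])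

lemma CNOT_mulvec:
  assumes "j \<noteq> k" "k < n" "x \<in> basis n"
  shows "mulvec n (gate_CNOT j k) v x = v (cpi j k x)"
proof -
  have "mulvec n (gate_CNOT j k) v x = (\<Sum>y\<in>basis n. if y = cpi j k x then v y else 0)"
    unfolding mulvec_def
  proof (rule sum.cong[OF refl])
    fix y
    have e: "x = cpi j k y \<longleftrightarrow> y = cpi j k x" using cpi_inv[OF assms(1)] by auto
    have g: "gate_CNOT j k x y = (if x = cpi j k y then 1 else 0)" by (simp add: gate_CNOT_def cpi_def)
    show "gate_CNOT j k x y * v y = (if y = cpi j k x then v y else 0)" unfolding g e by simp
  qed
  then show ?thesis using cpi_basis[OF assms(2,3)] by simp
qed

lemma prod_two:
  fixes j k n :: nat
  assumes "j < n" "k < n" "j \<noteq> k"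
  shows "(\<Prod>i<n. F i) = F j * F k * (\<Prod>i\<in>{..<n}-{j}-{k}. (F i :: complex))"
proof -
  have f: "finite {..<n}" "finite ({..<n}-{j})" by auto
  have "j \<in> {..<n}" "k \<in> {..<n}-{j}" using assms by auto
  then show ?thesis by (simp add: prod.remove[OF f(1)] prod.remove[OF f(2)] mult.assoc)
qed

lemma PP_pi:
  assumes jk: "j \<noteq> k" "j < n" "k < n"
  shows "PP n a b (cpi j k x) (cpi j k y) = PP n (cpi j k a) (cpi k j b) x y"
proof -
  have r: "(\<Prod>i\<in>{..<n}-{j}-{k}. pauli1 (i\<in>a) (i\<in>b) (i \<in> cpi j k x) (i \<in> cpi j k y))
     = (\<Prod>i\<in>{..<n}-{j}-{k}. pauli1 (i\<in>cpi j k a) (i\<in>cpi k j b) (i \<in> x) (i \<in> y))"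
    by (rule prod.cong) (use jk in \<open>auto simp: cpi_mem\<close>)
  have two: "pauli1 (j\<in>a) (j\<in>b) (j \<in> cpi j k x) (j \<in> cpi j k y) * pauli1 (k\<in>a) (k\<in>b) (k \<in> cpi j k x) (k \<in> cpi j k y)
     = pauli1 (j\<in>cpi j k a) (j\<in>cpi k j b) (j \<in> x) (j \<in> y) * pauli1 (k\<in>cpi j k a) (k\<in>cpi k j b) (k \<in> x) (k \<in> y)"
    using jk by (simp add: cpi_mem) (cases "j\<in>a"; cases "j\<in>b"; cases "k\<in>a"; cases "k\<in>b"; cases "j\<in>x"; cases "j\<in>y"; cases "k\<in>x"; cases "k\<in>y"; simp add: pauli1_def)
  show ?thesis unfolding PP_def tensor_def prod_two[OF jk(2,3,1)] r
    using two by simp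
qed

lemma Inv_CNOT:
  assumes inv: "Inv n v" and jk: "j < n" "k < n" "j \<noteq> k"
  shows "Inv n (mulvec n (gate_CNOT j k) v)"
proof (rule Inv_step[OF inv])
  have eq: "EE n (mulvec n (gate_CNOT j k) v) a b = EE n v (cpi j k a) (cpi k j b)" for a b
  proof -
    have "EE n (mulvec n (gate_CNOT j k) v) a b = (\<Sum>x\<in>basis n. \<Sum>y\<in>basis n. cnj (v (cpi j k x)) * PP n a b x y * v (cpi j k y))"
      unfolding EE_def expv_def using jk by (intro sum.cong refl) (simp add: CNOT_mulvec)
    also have "\<dots> = (\<Sum>x\<in>basis n. \<Sum>y\<in>basis n. cnj (v (cpi j k x)) * PP n a b (cpi j k (cpi j k x)) (cpi j k (cpi j k y)) * v (cpi j k y))"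
      using jk by (simp add: cpi_inv)
    also have "\<dots> = (\<Sum>x\<in>basis n. \<Sum>y\<in>basis n. cnj (v x) * PP n a b (cpi j k x) (cpi j k y) * v y)"
      by (subst sum_cpi[OF jk(3,2), symmetric], rule sum.cong[OF refl], subst sum_cpi[OF jk(3,2), symmetric]) (simp add: cpi_inv[OF jk(3)])
    also have "\<dots> = EE n v (cpi j k a) (cpi k j b)"
      unfolding EE_def expv_def using jk by (simp add: PP_pi)
    finally show ?thesis .
  qed
  show "\<exists>a' b' c. cmod c = 1 \<and> EE n (mulvec n (gate_CNOT j k) v) a b = c * EE n v a' b'" for a b
    unfolding eq by (rule exI, rule exI, rule exI[of _ 1]) simp
  show "EE n (mulvec n (gate_CNOT j k) v) {} {} = EE n v {} {}"
    unfolding eq by (simp add: cpi_def)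
qed

lemma PP_empty:
  assumes "x \<in> basis n" "y \<in> basis n"
  shows "PP n {} {} x y = (if x = y then 1 else 0)"
proof -
  have "PP n {} {} x y = (\<Prod>i<n. if (i\<in>x \<longleftrightarrow> i\<in>y) then 1 else 0)"
    unfolding PP_def tensor_def by (rule prod.cong) (auto simp: pauli1_def)
  also have "\<dots> = (if x = y then 1 else 0)"
    using assms by (subst prod_if_zero) (auto simp: basis_def)
  finally show ?thesis .
qed

lemma EE_empty: "EE n v {} {} = (\<Sum>x\<in>basis n. cnj (v x) * v x)"
proof -
  have "EE n v {} {} = (\<Sum>x\<in>basis n. \<Sum>y\<in>basis n. if y = x then cnj (v x) * v y else 0)"
    unfolding EE_def expv_def by (intro sum.cong refl) (auto simp: PP_empty)
  then show ?thesis by simp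
qed

lemma sum_delta_mult:
  assumes "finite S" "a \<in> S"
  shows "(\<Sum>y\<in>S. f y * (if y = a then 1 else 0)) = (f a :: complex)"
proof -
  have "(\<Sum>y\<in>S. f y * (if y = a then 1 else 0)) = (\<Sum>y\<in>S. if y = a then f a else 0)"
    by (rule sum.cong) auto
  then show ?thesis using assms by simp
qed

lemma Inv_ket0: "Inv n (mulvec n ident ket0)"
proof -
  have k: "\<forall>x\<in>basis n. mulvec n ident ket0 x = ket0 x"
  proof
    fix x assume x: "x \<in> basis n"
    have "mulvec n ident ket0 x = (\<Sum>y\<in>basis n. if y = x then ket0 x else 0)"
      unfolding mulvec_def ident_def by (intro sum.cong refl) auto
    then show "mulvec n ident ket0 x = ket0 x" using x by simp
  qed
  have e1: "EE n (mulvec n ident ket0) a b = PP n a b {} {}" for a b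
  proof -
    have "EE n (mulvec n ident ket0) a b = EE n ket0 a b"
      unfolding EE_def by (rule expv_cong) (use k in auto)
    also have "\<dots> = (\<Sum>x\<in>basis n. if x = {} then (\<Sum>y\<in>basis n. if y = {} then PP n a b x y else 0) else 0)"
      unfolding EE_def expv_def ket0_def by (intro sum.cong refl) (auto simp: sum_delta_mult)
    also have "\<dots> = PP n a b {} {}"
      by (simp add: basis_def)
    finally show ?thesis .
  qed
  have e2: "PP n a b {} {} = (\<Prod>i<n. if i \<in> a then 0 else 1)" for a b
    unfolding PP_def tensor_def by (rule prod.cong) (auto simp: pauli1_def)
  have D: "(\<Prod>i<n. if i \<in> a then 0 else 1) = (0::complex) \<or> (\<Prod>i<n. if i \<in> a then 0 else 1) = (1::complex)" for a
  proof (cases "\<exists>i\<in>{..<n}. i \<in> a")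
    case True
    then have "(\<Prod>i<n. if i \<in> a then 0 else 1) = (0::complex)" by (intro prod_zero) auto
    then show ?thesis by (rule disjI1)
  next
    case False
    then have "(\<Prod>i<n. if i \<in> a then 0 else 1) = (1::complex)" by (intro prod.neutral) auto
    then show ?thesis by (rule disjI2)
  qed
  have EEa: "EE n (mulvec n ident ket0) a b = (\<Prod>i<n. if i \<in> a then 0 else 1)" for a b
    unfolding e1 e2 ..
  show ?thesis unfolding Inv_def
  proof (intro conjI allI)
    show "EE n (mulvec n ident ket0) {} {} = 1" by (simp add: EEa)
    fix a b show "EE n (mulvec n ident ket0) a b = 0 \<or> cmod (EE n (mulvec n ident ket0) a b) = 1"
      unfolding EEa[of a b] using D[of a]
    proof
      assume h: "(\<Prod>i<n. if i \<in> a then 0 else 1) = (0::complex)"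
      show "(\<Prod>i<n. if i \<in> a then 0 else 1) = (0::complex) \<or> cmod (\<Prod>i<n. if i \<in> a then 0 else 1) = (1::real)"
        using h by (rule disjI1)
    next
      assume h: "(\<Prod>i<n. if i \<in> a then 0 else 1) = (1::complex)"
      show "(\<Prod>i<n. if i \<in> a then 0 else 1) = (0::complex) \<or> cmod (\<Prod>i<n. if i \<in> a then 0 else 1) = (1::real)"
        by (rule disjI2) (simp only: h norm_one)
    qed
  qed
qed

lemma Inv_clifford: "C \<in> clifford n \<Longrightarrow> Inv n (mulvec n C ket0)"
proof (induction rule: clifford.induct)
  case cl_id then show ?case by (rule Inv_ket0)
next
  case (cl_H C j) then show ?case by (simp add: mulvec_mmult Inv_H)
next
  case (cl_S C j) then show ?case by (simp add: mulvec_mmult Inv_S)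
next
  case (cl_CNOT C j k) then show ?case by (simp add: mulvec_mmult Inv_CNOT)
qed

lemma sumPP:
  assumes "x \<in> basis n" "y \<in> basis n"
  shows "(\<Sum>b\<in>basis n. PP n {..<n} b x y) = (if x = {..<n} \<and> y = {} then 2^n else 0)"
proof -
  have "(\<Sum>b\<in>basis n. PP n {..<n} b x y) = (\<Sum>b\<in>Pow {..<n}. \<Prod>i<n. (\<lambda>i c. pauli1 (i\<in>{..<n}) c (i\<in>x) (i\<in>y)) i (i\<in>b))"
    unfolding PP_def tensor_def basis_def by simp
  also have "\<dots> = (\<Prod>i<n. pauli1 (i\<in>{..<n}) False (i\<in>x) (i\<in>y) + pauli1 (i\<in>{..<n}) True (i\<in>x) (i\<in>y))"
    by (rule sum_prod_pow)
  also have "\<dots> = (\<Prod>i<n. if i \<in> x \<and> i \<notin> y then 2 else 0)"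
    by (rule prod.cong) (auto simp: pauli1_def)
  also have "\<dots> = (if x = {..<n} \<and> y = {} then 2^n else 0)"
    using assms by (subst prod_if_zero) (auto simp: basis_def)
  finally show ?thesis .
qed

lemma PP_all_row:
  assumes "y \<in> basis n"
  shows "PP n {..<n} b {..<n} y = (if y = {} then 1 else 0)"
proof -
  have "PP n {..<n} b {..<n} y = (\<Prod>i<n. if i \<notin> y then 1 else 0)"
    unfolding PP_def tensor_def by (rule prod.cong) (auto simp: pauli1_def)
  also have "\<dots> = (if y = {} then 1 else 0)"
    using assms by (subst prod_if_zero) (auto simp: basis_def)
  finally show ?thesis .
qed

lemma unit_pauli: "mult1 (mult1 (adj1 (pauli1 \<alpha> \<beta>)) (pauli1 False False)) (pauli1 \<alpha> \<beta>) = pauli1 False False"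
proof (intro ext)
  fix u w show "mult1 (mult1 (adj1 (pauli1 \<alpha> \<beta>)) (pauli1 False False)) (pauli1 \<alpha> \<beta>) u w = pauli1 False False u w"
    by (cases \<alpha>; cases \<beta>; cases u; cases w) (simp_all add: mult1_def adj1_def pauli1_def)
qed

lemma cnj_mult_self: "cnj z * z = complex_of_real ((cmod z)\<^sup>2)"
  using complex_norm_square[of z] by (simp add: mult.commute)

lemma Inv_equal_mod:
  assumes inv: "Inv n v" and nz: "v {} \<noteq> 0" "v {..<n} \<noteq> 0"
  shows "cmod (v {}) = cmod (v {..<n})"
proof -
  have all_b: "{..<n} \<in> basis n" and emp_b: "{} \<in> basis n" by (auto simp: basis_def)
  have "(\<Sum>b\<in>basis n. EE n v {..<n} b) = (\<Sum>x\<in>basis n. \<Sum>y\<in>basis n. cnj (v x) * (\<Sum>b\<in>basis n. PP n {..<n} b x y) * v y)"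
    unfolding EE_def expv_def
    by (subst sum.swap, rule sum.cong[OF refl], subst sum.swap) (simp add: sum_distrib_left sum_distrib_right)
  also have "\<dots> = (\<Sum>x\<in>basis n. if x = {..<n} then cnj (v x) * 2^n * v {} else 0)"
  proof (intro sum.cong refl)
    fix x assume x: "x \<in> basis n"
    have "(\<Sum>y\<in>basis n. cnj (v x) * (\<Sum>b\<in>basis n. PP n {..<n} b x y) * v y)
       = (\<Sum>y\<in>basis n. if y = {} then (if x = {..<n} then cnj (v x) * 2^n * v y else 0) else 0)"
      by (intro sum.cong refl) (auto simp: sumPP x)
    then show "(\<Sum>y\<in>basis n. cnj (v x) * (\<Sum>b\<in>basis n. PP n {..<n} b x y) * v y)
       = (if x = {..<n} then cnj (v x) * 2^n * v {} else 0)" using emp_b by simp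
  qed
  also have "\<dots> = cnj (v {..<n}) * 2^n * v {}"
    using all_b by simp
  finally have "(\<Sum>b\<in>basis n. EE n v {..<n} b) \<noteq> 0" using nz by simp
  then obtain b where "EE n v {..<n} b \<noteq> 0" by (meson sum.neutral)
  then have E1: "cmod (EE n v {..<n} b) = 1" using inv by (auto simp: Inv_def)
  define E where "E = EE n v {..<n} b"
  define w where "w = mulvec n (PP n {..<n} b) v"
  have Ew: "E = (\<Sum>x\<in>basis n. cnj (v x) * w x)"
    unfolding E_def EE_def expv_def w_def mulvec_def by (simp add: sum_distrib_left mult.assoc)
  have Ev: "cnj E = (\<Sum>x\<in>basis n. cnj (w x) * v x)"
    unfolding Ew by (simp add: mult.commute)
  have Nv: "(\<Sum>x\<in>basis n. cnj (v x) * v x) = 1" using inv by (simp add: Inv_def EE_empty)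
  have "EE n w {} {} = expv n v (mmult n (mmult n (adj (PP n {..<n} b)) (PP n {} {})) (PP n {..<n} b))"
    unfolding w_def EE_def expv_mulvec ..
  also have "\<dots> = EE n v {} {}"
    unfolding EE_def PP_def adj_tensor mmult_tensor
    by (simp add: unit_pauli)
  finally have Nw: "(\<Sum>x\<in>basis n. cnj (w x) * w x) = 1" using Nv by (simp add: EE_empty)
  have "(\<Sum>x\<in>basis n. cnj (w x - E * v x) * (w x - E * v x))
      = (\<Sum>x\<in>basis n. cnj (w x) * w x) - cnj E * (\<Sum>x\<in>basis n. cnj (v x) * w x)
        - E * (\<Sum>x\<in>basis n. cnj (w x) * v x) + E * cnj E * (\<Sum>x\<in>basis n. cnj (v x) * v x)"
    by (simp add: algebra_simps sum.distrib sum_subtractf sum_distrib_left)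
  also have "\<dots> = 1 - cnj E * E"
    using Nw Nv Ew Ev by (simp add: algebra_simps)
  also have "\<dots> = 0"
    using E1 unfolding E_def[symmetric] by (simp add: cnj_mult_self)
  finally have S0: "(\<Sum>x\<in>basis n. cnj (w x - E * v x) * (w x - E * v x)) = 0" .
  have "(\<Sum>x\<in>basis n. complex_of_real ((cmod (w x - E * v x))\<^sup>2)) = 0"
    using S0 unfolding cnj_mult_self .
  then have "complex_of_real (\<Sum>x\<in>basis n. (cmod (w x - E * v x))\<^sup>2) = 0"
    by (simp only: of_real_sum)
  then have "(\<Sum>x\<in>basis n. (cmod (w x - E * v x))\<^sup>2) = 0"
    by (simp only: of_real_eq_0_iff)
  then have "\<forall>x\<in>basis n. (cmod (w x - E * v x))\<^sup>2 = 0"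
    by (subst (asm) sum_nonneg_eq_0_iff) (auto simp: basis_def)
  then have "w {..<n} = E * v {..<n}" using all_b by auto
  moreover have "w {..<n} = v {}"
  proof -
    have "w {..<n} = (\<Sum>y\<in>basis n. if y = {} then v y else 0)"
      unfolding w_def mulvec_def by (intro sum.cong refl) (simp add: PP_all_row)
    then show ?thesis using emp_b by simp
  qed
  ultimately show ?thesis using E1 unfolding E_def[symmetric] by (simp add: norm_mult)
qed

lemma re_le_sq:
  assumes "cmod a = cmod b \<or> a = 0 \<or> b = 0"
  shows "Re (a * cnj b) \<le> (cmod a)\<^sup>2" "Re (a * cnj b) \<le> (cmod b)\<^sup>2"
proof -
  have "Re (a * cnj b) \<le> cmod (a * cnj b)" by (rule complex_Re_le_cmod)
  also have "\<dots> = cmod a * cmod b" by (simp add: norm_mult)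
  finally have h: "Re (a * cnj b) \<le> cmod a * cmod b" .
  show "Re (a * cnj b) \<le> (cmod a)\<^sup>2" "Re (a * cnj b) \<le> (cmod b)\<^sup>2"
    using assms h by (auto simp: power2_eq_square)
qed

lemma stab_mod:
  assumes "s \<in> stab_states n"
  shows "cmod (s {}) = cmod (s {..<n}) \<or> s {} = 0 \<or> s {..<n} = 0"
proof -
  obtain C where "C \<in> clifford n" "s = mulvec n C ket0" using assms by (auto simp: stab_states_def)
  then have "Inv n s" using Inv_clifford by simp
  then show ?thesis using Inv_equal_mod by blast
qed

lemma stab_poly_necessary:
  assumes "\<rho> \<in> stab_poly n"
  shows "Re (\<rho> {} {}) \<ge> Re (\<rho> {} {..<n}) \<and> Re (\<rho> {..<n} {..<n}) \<ge> Re (\<rho> {} {..<n})"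
proof -
  obtain I :: "nat set" and w :: "nat \<Rightarrow> real" and s :: "nat \<Rightarrow> qvec" where I: "finite I" "\<forall>i\<in>I. w i \<ge> 0 \<and> s i \<in> stab_states n"
    and m: "meq n \<rho> (\<lambda>x y. \<Sum>i\<in>I. complex_of_real (w i) * proj (s i) x y)"
    using assms unfolding stab_poly_def by blast
  have e: "{} \<in> basis n" "{..<n} \<in> basis n" by (auto simp: basis_def)
  have r: "\<rho> x y = (\<Sum>i\<in>I. complex_of_real (w i) * (s i x * cnj (s i y)))" if "x \<in> basis n" "y \<in> basis n" for x y
    using m that by (simp add: meq_def proj_def)
  have Re_sum: "Re (\<rho> x y) = (\<Sum>i\<in>I. w i * Re (s i x * cnj (s i y)))" if "x \<in> basis n" "y \<in> basis n" for x y
    unfolding r[OF that] Re_sum by simp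
  have sq: "Re (s i x * cnj (s i x)) = (cmod (s i x))\<^sup>2" for i x
    by (simp add: complex_mult_cnj cmod_power2)
  have "Re (\<rho> {} {..<n}) \<le> Re (\<rho> {} {})"
    unfolding Re_sum[OF e(1) e(2)] Re_sum[OF e(1) e(1)] sq
    using I stab_mod re_le_sq by (intro sum_mono mult_left_mono) auto
  moreover have "Re (\<rho> {} {..<n}) \<le> Re (\<rho> {..<n} {..<n})"
    unfolding Re_sum[OF e(1) e(2)] Re_sum[OF e(2) e(2)] sq
    using I stab_mod re_le_sq by (intro sum_mono mult_left_mono) auto
  ultimately show ?thesis by simp
qed

lemma gate_vanish:
  assumes "z \<notin> basis n" "y \<in> basis n" "j < n" "k < n"
  shows "gate_H j z y = 0" "gate_S j z y = 0" "gate_CNOT j k z y = 0"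
proof -
  obtain e where e: "e \<in> z" "e \<ge> n" using assms(1) unfolding basis_def by (metis PowI lessThan_iff not_less subsetI)
  have "e \<notin> y" using e assms(2) by (auto simp: basis_def)
  moreover have "e \<noteq> j" using e assms(3) by auto
  ultimately have "z - {j} \<noteq> y - {j}" using e by blast
  then show "gate_H j z y = 0" by (simp add: gate_H_def)
  show "gate_S j z y = 0" using assms(1,2) by (auto simp: gate_S_def)
  have "cpi j k y \<in> basis n" using cpi_basis[OF assms(4,2)] .
  then show "gate_CNOT j k z y = 0" using assms(1) by (auto simp: gate_CNOT_def cpi_def)
qed

lemma ident_vanish: "z \<notin> basis n \<Longrightarrow> y \<in> basis n \<Longrightarrow> ident z y = 0"
  by (auto simp: ident_def)

lemma stab_vanish_C:
  "C \<in> clifford n \<Longrightarrow> z \<notin> basis n \<Longrightarrow> mulvec n C ket0 z = 0"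
proof (induction arbitrary: z rule: clifford.induct)
  case cl_id then show ?case unfolding mulvec_def using ident_vanish[of z n] by (auto intro!: sum.neutral)
next
  case (cl_H C j) then show ?case unfolding mulvec_mmult
    by (subst mulvec_def) (auto intro!: sum.neutral simp: gate_vanish(1)[of z n _ j j])
next
  case (cl_S C j) then show ?case unfolding mulvec_mmult
    by (subst mulvec_def) (auto intro!: sum.neutral simp: gate_vanish(2)[of z n _ j j])
next
  case (cl_CNOT C j k) then show ?case unfolding mulvec_mmult
    by (subst mulvec_def) (auto intro!: sum.neutral simp: gate_vanish(3)[of z n _ j k])
qed

lemma stab_vanish: "s \<in> stab_states n \<Longrightarrow> z \<notin> basis n \<Longrightarrow> s z = 0"
  unfolding stab_states_def using stab_vanish_C by blast

lemma stab_ext: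
  assumes "v \<in> stab_states n" "\<forall>z\<in>basis n. w z = v z" "\<forall>z. z \<notin> basis n \<longrightarrow> w z = 0"
  shows "w \<in> stab_states n"
proof -
  have "w = v" using assms stab_vanish by (intro ext) metis
  then show ?thesis using assms(1) by simp
qed

lemma stab_gate: "v \<in> stab_states n \<Longrightarrow> (\<And>C. C \<in> clifford n \<Longrightarrow> mmult n G C \<in> clifford n) \<Longrightarrow> mulvec n G v \<in> stab_states n"
proof -
  assume v: "v \<in> stab_states n" and G: "\<And>C. C \<in> clifford n \<Longrightarrow> mmult n G C \<in> clifford n"
  obtain C where C: "C \<in> clifford n" "v = mulvec n C ket0" using v by (auto simp: stab_states_def)
  have "mulvec n G v = mulvec n (mmult n G C) ket0" using C by (simp add: mulvec_mmult)
  then show ?thesis using G[OF C(1)] by (auto simp: stab_states_def)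
qed

lemma stab_H: "v \<in> stab_states n \<Longrightarrow> j < n \<Longrightarrow> mulvec n (gate_H j) v \<in> stab_states n"
  by (erule stab_gate) (simp add: clifford.cl_H)
lemma stab_S: "v \<in> stab_states n \<Longrightarrow> j < n \<Longrightarrow> mulvec n (gate_S j) v \<in> stab_states n"
  by (erule stab_gate) (simp add: clifford.cl_S)
lemma stab_CNOT: "v \<in> stab_states n \<Longrightarrow> j < n \<Longrightarrow> k < n \<Longrightarrow> j \<noteq> k \<Longrightarrow> mulvec n (gate_CNOT j k) v \<in> stab_states n"
  by (erule stab_gate) (simp add: clifford.cl_CNOT)

definition agree :: "nat \<Rightarrow> qmat \<Rightarrow> qmat \<Rightarrow> bool" where
  "agree n G T \<longleftrightarrow> (\<forall>x\<in>basis n. \<forall>y\<in>basis n. G x y = T x y)"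

lemma mulvec_agree: "agree n G T \<Longrightarrow> x \<in> basis n \<Longrightarrow> mulvec n G v x = mulvec n T v x"
  unfolding agree_def mulvec_def by (auto intro!: sum.cong)

lemma mmult_agree: "agree n G1 T1 \<Longrightarrow> agree n G2 T2 \<Longrightarrow> agree n (mmult n G1 G2) (mmult n T1 T2)"
  unfolding agree_def mmult_def by (auto intro!: sum.cong)

definition xq :: qubit_op where "xq = pauli1 True False"

lemma hssh: "mult1 hq (mult1 sq (mult1 sq hq)) = xq"
proof (intro ext)
  fix u w show "mult1 hq (mult1 sq (mult1 sq hq)) u w = xq u w"
    by (cases u; cases w) (simp_all add: mult1_def hq_def sq_def xq_def pauli1_def field_simps sqrt2c)
qed

lemma idq_mult: "mult1 idq idq = idq"
  by (intro ext) (simp add: mult1_def idq_def)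

lemma ket0_stab: "ket0 \<in> stab_states n"
proof -
  have "mulvec n ident ket0 \<in> stab_states n" unfolding stab_states_def using clifford.cl_id by blast
  moreover have "mulvec n ident ket0 = ket0"
  proof (intro ext)
    fix z
    have "mulvec n ident ket0 z = (\<Sum>y\<in>basis n. if y = z then ket0 z else 0)"
      unfolding mulvec_def ident_def by (intro sum.cong refl) auto
    then show "mulvec n ident ket0 z = ket0 z" by (auto simp: ket0_def basis_def)
  qed
  ultimately show ?thesis by simp
qed

lemma stab_X:
  assumes v: "v \<in> stab_states n" and j: "j < n"
  shows "(\<lambda>z. if z \<in> basis n then v (toggle j z) else 0) \<in> stab_states n"
proof -
  let ?TH = "tensor n (\<lambda>i. if i = j then hq else idq)"
  let ?TS = "tensor n (\<lambda>i. if i = j then sq else idq)"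
  have aH: "agree n (gate_H j) ?TH" using H_tensor[OF j] by (simp add: agree_def)
  have aS: "agree n (gate_S j) ?TS" using S_tensor[OF j] by (simp add: agree_def)
  have a: "agree n (mmult n (gate_H j) (mmult n (gate_S j) (mmult n (gate_S j) (gate_H j))))
      (tensor n (\<lambda>i. if i = j then xq else idq))"
  proof -
    have "agree n (mmult n (gate_H j) (mmult n (gate_S j) (mmult n (gate_S j) (gate_H j))))
      (mmult n ?TH (mmult n ?TS (mmult n ?TS ?TH)))"
      by (intro mmult_agree aH aS)
    moreover have "mmult n ?TH (mmult n ?TS (mmult n ?TS ?TH)) = tensor n (\<lambda>i. if i = j then xq else idq)"
      unfolding mmult_tensor by (rule arg_cong[where f = "tensor n"]) (auto simp: hssh idq_mult)
    ultimately show ?thesis by simp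
  qed
  let ?w = "mulvec n (gate_H j) (mulvec n (gate_S j) (mulvec n (gate_S j) (mulvec n (gate_H j) v)))"
  have w: "?w \<in> stab_states n" using v j by (intro stab_H stab_S) 
  show ?thesis
  proof (rule stab_ext[OF w])
    show "\<forall>z. z \<notin> basis n \<longrightarrow> (if z \<in> basis n then v (toggle j z) else 0) = 0" by simp
    show "\<forall>z\<in>basis n. (if z \<in> basis n then v (toggle j z) else 0) = ?w z"
    proof
      fix z assume z: "z \<in> basis n"
      have tb: "toggle j z \<in> basis n" using z j by (auto simp: toggle_def basis_def)
      have "?w z = mulvec n (tensor n (\<lambda>i. if i = j then xq else idq)) v z"
        unfolding mulvec_mmult[symmetric] using mulvec_agree[OF a z] .
      also have "\<dots> = (\<Sum>y\<in>basis n. if y = toggle j z then v y else 0)"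
        unfolding mulvec_def
      proof (intro sum.cong refl)
        fix y assume y: "y \<in> basis n"
        have "(xq (j \<in> z) (j \<in> y) * (if z - {j} = y - {j} then 1 else 0)) = (if y = toggle j z then 1 else 0)"
          by (auto simp: xq_def pauli1_def toggle_def)
        then show "tensor n (\<lambda>i. if i = j then xq else idq) z y * v y = (if y = toggle j z then v y else 0)"
          unfolding tensor_single[OF j z y] by simp
      qed
      also have "\<dots> = v (toggle j z)" using tb by simp
      finally show "(if z \<in> basis n then v (toggle j z) else 0) = ?w z" using z by simp
    qed
  qed
qed

definition ev :: "nat set \<Rightarrow> qvec" where "ev x = (\<lambda>z. if z = x then 1 else 0)"

definition ghz :: "nat \<Rightarrow> qvec" where
  "ghz m = (\<lambda>z. if z = {} \<or> z = {..<m} then complex_of_real (1 / sqrt 2) else 0)"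

lemma ev_stab: "finite x \<Longrightarrow> x \<subseteq> {..<n} \<Longrightarrow> ev x \<in> stab_states n"
proof (induction x rule: finite_induct)
  case empty
  have "ev {} = ket0" by (simp add: ev_def ket0_def)
  then show ?case using ket0_stab by simp
next
  case (insert k x)
  have k: "k < n" using insert by auto
  have "(\<lambda>z. if z \<in> basis n then ev x (toggle k z) else 0) \<in> stab_states n"
    using insert k by (intro stab_X) auto
  moreover have "(\<lambda>z. if z \<in> basis n then ev x (toggle k z) else 0) = ev (insert k x)"
  proof (intro ext)
    fix z
    have "insert k x \<in> basis n" using insert by (auto simp: basis_def)
    moreover have "toggle k z = x \<longleftrightarrow> z = insert k x" using insert(2) by (auto simp: toggle_def)
    ultimately show "(if z \<in> basis n then ev x (toggle k z) else 0) = ev (insert k x) z"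
      by (auto simp: ev_def)
  qed
  ultimately show ?case by simp
qed

lemma ev_stab': "x \<in> basis n \<Longrightarrow> ev x \<in> stab_states n"
  by (rule ev_stab) (auto simp: basis_def intro: finite_subset)

lemma mulvec_ket0: "mulvec n G ket0 z = G z {}"
proof -
  have "mulvec n G ket0 z = (\<Sum>y\<in>basis n. if y = {} then G z {} else 0)"
    unfolding mulvec_def ket0_def by (intro sum.cong refl) auto
  then show ?thesis by (simp add: basis_def)
qed

lemma ghz_stab: "1 \<le> m \<Longrightarrow> m \<le> n \<Longrightarrow> ghz m \<in> stab_states n"
proof (induction m)
  case 0 then show ?case by simp
next
  case (Suc m)
  show ?case
  proof (cases "m = 0")
    case True
    have n: "0 < n" using Suc by simp
    have "mulvec n (gate_H 0) ket0 \<in> stab_states n" using ket0_stab n by (rule stab_H)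
    moreover have "mulvec n (gate_H 0) ket0 = ghz 1"
    proof (intro ext)
      fix z :: "nat set"
      have l1: "{..<1::nat} = {0}" by auto
      have "z - {0} = {} \<longleftrightarrow> z \<subseteq> {0}" by (rule Diff_eq_empty_iff)
      then have "z - {0} = {} \<longleftrightarrow> z = {} \<or> z = {..<1}" unfolding l1 subset_singleton_iff .
      then show "mulvec n (gate_H 0) ket0 z = ghz 1 z"
        unfolding mulvec_ket0 by (simp add: gate_H_def ghz_def)
    qed
    ultimately show ?thesis using True by simp
  next
    case False
    then have m1: "1 \<le> m" "m < n" "0 \<noteq> m" using Suc by auto
    have st: "ghz m \<in> stab_states n" using Suc m1 by simp
    have w: "mulvec n (gate_CNOT 0 m) (ghz m) \<in> stab_states n"
      using st m1 by (intro stab_CNOT) auto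
    show ?thesis
    proof (rule stab_ext[OF w])
      have "{} \<in> basis n" "{..<Suc m} \<in> basis n" using m1 by (auto simp: basis_def)
      then show "\<forall>z. z \<notin> basis n \<longrightarrow> ghz (Suc m) z = 0" by (auto simp: ghz_def)
      show "\<forall>z\<in>basis n. ghz (Suc m) z = mulvec n (gate_CNOT 0 m) (ghz m) z"
      proof
        fix z assume z: "z \<in> basis n"
        have c1: "cpi 0 m {} = {}" by (simp add: cpi_def)
        have c2: "cpi 0 m {..<Suc m} = {..<m}" using m1 by (auto simp: cpi_def toggle_def)
        have e1: "cpi 0 m z = {} \<longleftrightarrow> z = {}" using cpi_inv[OF m1(3), of z] c1 by metis
        have e2: "cpi 0 m z = {..<m} \<longleftrightarrow> z = {..<Suc m}" using cpi_inv[OF m1(3)] c2 by metis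
        show "ghz (Suc m) z = mulvec n (gate_CNOT 0 m) (ghz m) z"
          unfolding CNOT_mulvec[OF m1(3) m1(2) z] using e1 e2 by (simp add: ghz_def)
      qed
    qed
  qed
qed

lemma sum_pr: "(\<Sum>x\<in>basis n. pr n g x) = 1"
proof -
  have "(\<Sum>x\<in>basis n. pr n g x) = (\<Sum>x\<in>Pow {..<n}. \<Prod>i<n. (\<lambda>i c. if c then 1 - g i else g i) i (i\<in>x))"
    unfolding pr_def basis_def by simp
  also have "\<dots> = (\<Prod>i<n. g i + (1 - g i))" by (subst sum_prod_pow) simp
  also have "\<dots> = 1" by simp
  finally show ?thesis .
qed

lemma pr_nonneg: "\<forall>i<n. 0 \<le> g i \<and> g i \<le> 1 \<Longrightarrow> pr n g x \<ge> 0"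
  unfolding pr_def by (intro prod_nonneg) auto

lemma ghz_prod:
  "ghz m x * cnj (ghz m y) = (if (x = {} \<or> x = {..<m}) \<and> (y = {} \<or> y = {..<m}) then complex_of_real (1/2) else 0)"
proof -
  have "complex_of_real (1 / sqrt 2) * complex_of_real (1 / sqrt 2) = complex_of_real (1/2)"
    by (simp flip: of_real_mult)
  then show ?thesis by (simp add: ghz_def)
qed

lemma stab_poly_reindex:
  fixes I :: "nat set set" and w :: "nat set \<Rightarrow> real" and s :: "nat set \<Rightarrow> qvec"
  assumes fin: "finite I" and allfin: "\<forall>i\<in>I. finite i"
    and pos: "\<forall>i\<in>I. w i \<ge> 0 \<and> s i \<in> stab_states n"
    and sumw: "(\<Sum>i\<in>I. w i) = 1"
    and m: "meq n \<rho> (\<lambda>x y. \<Sum>i\<in>I. complex_of_real (w i) * proj (s i) x y)"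
  shows "\<rho> \<in> stab_poly n"
proof -
  define I' where "I' = set_encode ` I"
  define w' where "w' k = w (set_decode k)" for k
  define s' where "s' k = s (set_decode k)" for k
  have inj: "inj_on set_encode I"
    by (rule inj_on_subset[OF inj_on_set_encode]) (use allfin in auto)
  have sm: "(\<Sum>k\<in>I'. f (set_decode k)) = (\<Sum>i\<in>I. f i)" for f :: "nat set \<Rightarrow> 'b::comm_monoid_add"
    unfolding I'_def by (subst sum.reindex[OF inj]) (use allfin in auto)
  have f': "finite I'" using fin by (simp add: I'_def)
  have p': "\<forall>k\<in>I'. w' k \<ge> 0 \<and> s' k \<in> stab_states n"
    using pos allfin by (auto simp: I'_def w'_def s'_def)
  have s': "(\<Sum>k\<in>I'. w' k) = 1" unfolding w'_def sm by (rule sumw)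
  have m': "meq n \<rho> (\<lambda>x y. \<Sum>k\<in>I'. complex_of_real (w' k) * proj (s' k) x y)"
    unfolding meq_def
  proof (intro ballI)
    fix x y assume xy: "x \<in> basis n" "y \<in> basis n"
    have "\<rho> x y = (\<Sum>i\<in>I. complex_of_real (w i) * proj (s i) x y)" using m xy by (simp add: meq_def)
    also have "\<dots> = (\<Sum>k\<in>I'. complex_of_real (w' k) * proj (s' k) x y)"
      unfolding w'_def s'_def using sm[of "\<lambda>i. complex_of_real (w i) * proj (s i) x y"] by simp
    finally show "\<rho> x y = (\<Sum>k\<in>I'. complex_of_real (w' k) * proj (s' k) x y)" .
  qed
  show ?thesis unfolding stab_poly_def mem_Collect_eq
    apply (rule exI[where x = I'])
    apply (rule exI[where x = w'])
    apply (rule exI[where x = s'])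
    using f' p' s' m' by simp
qed

lemma sufficiency:
  fixes a b :: real and g :: "nat \<Rightarrow> real"
  assumes n1: "n \<ge> 1" and g: "\<forall>i<n. 0 \<le> g i \<and> g i \<le> 1" and ab: "a\<^sup>2 + b\<^sup>2 = 1"
    and c0: "a * b * mm n g {..<n} \<ge> 0"
    and h0: "rf n a b g {} {} \<ge> a * b * mm n g {..<n}"
    and h1: "rf n a b g {..<n} {..<n} \<ge> a * b * mm n g {..<n}"
  shows "damp n g (proj (psi n a b)) \<in> stab_poly n"
proof -
  define c where "c = a * b * mm n g {..<n}"
  define F where "F = ({..<n} :: nat set)"
  have "0 \<in> {..<n}" using n1 by simp
  then have ne: "{} \<noteq> F" unfolding F_def by blast
  have nb: "{n} \<notin> basis n" by (auto simp: basis_def)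
  have eb: "{} \<in> basis n" "F \<in> basis n" by (auto simp: basis_def F_def)
  define I where "I = insert {n} (basis n)"
  define w where "w z = (if z = {n} then 2 * c else rf n a b g z z - (if z = {} \<or> z = F then c else 0))" for z
  define s where "s z = (if z = {n} then ghz n else ev z)" for z
  have rfd: "rf n a b g x x = b\<^sup>2 * pr n g x + (if x = {} then a\<^sup>2 else 0)" for x
    using ne unfolding rf_def F_def by auto
  have fin: "finite I" by (simp add: I_def)
  have pos: "\<forall>i\<in>I. w i \<ge> 0 \<and> s i \<in> stab_states n"
  proof
    fix i assume i: "i \<in> I"
    show "w i \<ge> 0 \<and> s i \<in> stab_states n"
    proof (cases "i = {n}")
      case True then show ?thesis using c0 ghz_stab[of n n] n1 by (simp add: w_def s_def c_def)
    next
      case False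
      then have ib: "i \<in> basis n" using i by (simp add: I_def)
      have "rf n a b g i i \<ge> (if i = {} \<or> i = F then c else 0)"
        using h0 h1 pr_nonneg[OF g, of i] unfolding c_def F_def rfd by auto
      then show ?thesis using False ev_stab'[OF ib] by (simp add: w_def s_def)
    qed
  qed
  have sumw: "(\<Sum>i\<in>I. w i) = 1"
  proof -
    have "(\<Sum>i\<in>I. w i) = 2 * c + (\<Sum>x\<in>basis n. w x)" unfolding I_def using nb by (simp add: w_def)
    also have "(\<Sum>x\<in>basis n. w x) = (\<Sum>x\<in>basis n. b\<^sup>2 * pr n g x + (if x = {} then a\<^sup>2 else 0) - ((if x = {} then c else 0) + (if x = F then c else 0)))"
      using nb ne by (intro sum.cong refl) (auto simp: w_def rfd)
    also have "\<dots> = b\<^sup>2 + a\<^sup>2 - 2 * c"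
      using eb by (simp add: sum_subtractf sum.distrib sum_distrib_left[symmetric] sum_pr)
    finally show ?thesis using ab by simp
  qed
  have m: "meq n (damp n g (proj (psi n a b))) (\<lambda>x y. \<Sum>i\<in>I. complex_of_real (w i) * proj (s i) x y)"
    unfolding meq_def
  proof (intro ballI)
    fix x y assume x: "x \<in> basis n" and y: "y \<in> basis n"
    have "(\<Sum>i\<in>I. complex_of_real (w i) * proj (s i) x y)
       = complex_of_real (2 * c) * (ghz n x * cnj (ghz n y)) + (\<Sum>z\<in>basis n. complex_of_real (w z) * (ev z x * cnj (ev z y)))"
    proof -
      have "(\<Sum>z\<in>basis n. complex_of_real (w z) * proj (s z) x y) = (\<Sum>z\<in>basis n. complex_of_real (w z) * (ev z x * cnj (ev z y)))"
        by (intro sum.cong refl) (use nb in \<open>auto simp: s_def proj_def\<close>)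
      then show ?thesis unfolding I_def using nb by (simp add: w_def s_def proj_def)
    qed
    also have "(\<Sum>z\<in>basis n. complex_of_real (w z) * (ev z x * cnj (ev z y))) = (\<Sum>z\<in>basis n. if z = x then (if x = y then complex_of_real (w x) else 0) else 0)"
      by (intro sum.cong refl) (auto simp: ev_def)
    also have "\<dots> = (if x = y then complex_of_real (w x) else 0)" using x by simp
    finally have r: "(\<Sum>i\<in>I. complex_of_real (w i) * proj (s i) x y)
       = complex_of_real (2 * c) * (ghz n x * cnj (ghz n y)) + (if x = y then complex_of_real (w x) else 0)" .
    have xn: "x \<noteq> {n}" using x nb by auto
    show "damp n g (proj (psi n a b)) x y = (\<Sum>i\<in>I. complex_of_real (w i) * proj (s i) x y)"
      unfolding r rho_formula[OF n1 g x y] ghz_prod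
      using ne xn unfolding F_def[symmetric]
      by (cases "x = y"; cases "x = {}"; cases "y = {}"; cases "x = F"; cases "y = F")
         (simp_all add: rf_def w_def c_def F_def)
  qed
  have allfin: "\<forall>i\<in>I. finite i" by (auto simp: I_def basis_def intro: finite_subset)
  show ?thesis by (rule stab_poly_reindex[OF fin allfin pos sumw m])
qed

lemma unitary_col:
  assumes "unitary n U" "z \<in> basis n"
  shows "(\<Sum>x\<in>basis n. (cmod (U x z))\<^sup>2) = 1"
proof -
  have "mmult n (adj U) U z z = 1" using assms by (simp add: unitary_def meq_def ident_def)
  then have "(\<Sum>x\<in>basis n. cnj (U x z) * U x z) = 1" by (simp add: mmult_def adj_def)
  then have "(\<Sum>x\<in>basis n. complex_of_real ((cmod (U x z))\<^sup>2)) = 1" by (simp add: cnj_mult_self)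
  then have "complex_of_real (\<Sum>x\<in>basis n. (cmod (U x z))\<^sup>2) = 1" by (simp only: of_real_sum)
  then show ?thesis by (simp only: of_real_eq_1_iff)
qed

lemma unitary_entry:
  assumes "unitary n U" "x \<in> basis n" "z \<in> basis n"
  shows "cmod (U x z) \<le> 1"
proof -
  have "(cmod (U x z))\<^sup>2 \<le> (\<Sum>x\<in>basis n. (cmod (U x z))\<^sup>2)"
    by (rule member_le_sum) (use assms in auto)
  then have "(cmod (U x z))\<^sup>2 \<le> 1" using unitary_col[OF assms(1,3)] by simp
  then show ?thesis by (simp add: power_le_one_iff abs_le_square_iff[symmetric])
qed

lemma unitary_norm:
  assumes "unitary n U"
  shows "(\<Sum>x\<in>basis n. (cmod (mulvec n U u x))\<^sup>2) = (\<Sum>x\<in>basis n. (cmod (u x))\<^sup>2)"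
proof -
  have eq: "mmult n (mmult n (adj U) ident) U x y = mmult n (adj U) U x y" if "x \<in> basis n" for x y
  proof -
    have "mmult n (adj U) ident x z = adj U x z" if "z \<in> basis n" for z
    proof -
      have "mmult n (adj U) ident x z = (\<Sum>w\<in>basis n. if w = z then adj U x z else 0)"
        unfolding mmult_def ident_def by (intro sum.cong refl) auto
      then show ?thesis using that by simp
    qed
    then show ?thesis unfolding mmult_def[of n "mmult n (adj U) ident"] by (simp add: mmult_def[of n "adj U" U])
  qed
  have "expv n (mulvec n U u) ident = expv n u (mmult n (mmult n (adj U) ident) U)" by (rule expv_mulvec)
  also have "\<dots> = expv n u ident"
    using assms eq by (intro expv_cong) (auto simp: unitary_def meq_def)
  finally have e: "expv n (mulvec n U u) ident = expv n u ident" .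
  have ev: "expv n v ident = complex_of_real (\<Sum>x\<in>basis n. (cmod (v x))\<^sup>2)" for v
  proof -
    have "expv n v ident = (\<Sum>x\<in>basis n. \<Sum>y\<in>basis n. if y = x then cnj (v x) * v x else 0)"
      unfolding expv_def ident_def by (intro sum.cong refl) auto
    also have "\<dots> = (\<Sum>x\<in>basis n. complex_of_real ((cmod (v x))\<^sup>2))" by (simp add: cnj_mult_self)
    finally show ?thesis by (simp only: of_real_sum)
  qed
  show ?thesis using e unfolding ev by (simp only: of_real_eq_iff)
qed

lemma unitary_ident: "unitary n ident"
proof -
  have "mmult n (adj ident) ident x y = ident x y" if "x \<in> basis n" "y \<in> basis n" for x y
  proof -
    have "mmult n (adj ident) ident x y = (\<Sum>z\<in>basis n. if z = x then ident x y else 0)"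
      unfolding mmult_def adj_def ident_def by (intro sum.cong refl) auto
    then show ?thesis using that by simp
  qed
  then show ?thesis by (simp add: unitary_def meq_def)
qed

lemma sum_two:
  assumes "finite S" "A \<in> S" "B \<in> S" "A \<noteq> B" "\<forall>x\<in>S. x \<noteq> A \<and> x \<noteq> B \<longrightarrow> h x = 0"
  shows "sum h S = h A + h B"
proof -
  have "sum h S = sum h {A, B}"
    by (rule sum.mono_neutral_right) (use assms in auto)
  then show ?thesis using assms(4) by simp
qed

definition mfun :: "nat set \<Rightarrow> nat set \<Rightarrow> (nat set \<Rightarrow> real) \<Rightarrow> real \<Rightarrow> nat set \<Rightarrow> nat set \<Rightarrow> real" where
  "mfun A B d c x y = (if x = y then d x else 0) + (if (x = A \<and> y = B) \<or> (x = B \<and> y = A) then c else 0)"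

locale tnset =
  fixes n :: nat and A B :: "nat set" and d :: "nat set \<Rightarrow> real" and c :: real and M :: qmat
  assumes AB: "A \<in> basis n" "B \<in> basis n" "A \<noteq> B"
    and dpos: "\<forall>x\<in>basis n. d x \<ge> 0" and dsum: "(\<Sum>x\<in>basis n. d x) = 1" and cpos: "c > 0"
    and Mdef: "\<forall>x\<in>basis n. \<forall>y\<in>basis n. M x y = complex_of_real (mfun A B d c x y)"
begin

lemma trace_expand: "mtrace n (mmult n U M) = (\<Sum>x\<in>basis n. \<Sum>z\<in>basis n. U x z * M z x)"
  unfolding mtrace_def mmult_def ..

definition K where "K = (\<Sum>x\<in>basis n. \<Sum>z\<in>basis n. cmod (M z x))"

lemma trace_bound: "unitary n U \<Longrightarrow> cmod (mtrace n (mmult n U M)) \<le> K"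
proof -
  assume U: "unitary n U"
  have "cmod (mtrace n (mmult n U M)) \<le> (\<Sum>x\<in>basis n. cmod (\<Sum>z\<in>basis n. U x z * M z x))"
    unfolding trace_expand by (rule norm_sum)
  also have "\<dots> \<le> (\<Sum>x\<in>basis n. \<Sum>z\<in>basis n. cmod (U x z * M z x))"
    by (intro sum_mono norm_sum)
  also have "\<dots> \<le> (\<Sum>x\<in>basis n. \<Sum>z\<in>basis n. cmod (M z x))"
  proof (intro sum_mono)
    fix x z assume "x \<in> basis n" "z \<in> basis n"
    then have "cmod (U x z) \<le> 1" using unitary_entry[OF U] by blast
    then show "cmod (U x z * M z x) \<le> cmod (M z x)"
      by (simp add: norm_mult mult_left_le_one_le)
  qed
  finally show ?thesis unfolding K_def .
qed

definition SS where "SS = {cmod (mtrace n (mmult n U M)) |U. unitary n U}"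

lemma SS_bdd: "bdd_above SS"
  unfolding SS_def bdd_above_def using trace_bound by blast

lemma one_in_SS: "1 \<in> SS"
proof -
  have "mtrace n (mmult n ident M) = (\<Sum>x\<in>basis n. \<Sum>z\<in>basis n. if z = x then M x x else 0)"
    unfolding trace_expand ident_def by (intro sum.cong refl) auto
  also have "\<dots> = (\<Sum>x\<in>basis n. complex_of_real (d x))"
    using Mdef AB(3) by (intro sum.cong refl) (auto simp: mfun_def)
  also have "\<dots> = 1" using dsum by (simp only: of_real_sum[symmetric]) simp
  finally show ?thesis unfolding SS_def using unitary_ident by force
qed

lemma tn_ge1: "trace_norm n M \<ge> 1"
  unfolding trace_norm_def SS_def[symmetric] using one_in_SS SS_bdd by (rule cSup_upper)

lemma amgm: "(a::real) * b \<le> (a\<^sup>2 + b\<^sup>2) / 2"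
proof -
  have "0 \<le> (a - b)\<^sup>2" by simp
  then show ?thesis by (simp add: power2_eq_square algebra_simps)
qed

lemma upper:
  assumes det: "c\<^sup>2 \<le> d A * d B" and U: "unitary n U"
  shows "cmod (mtrace n (mmult n U M)) \<le> 1"
proof -
  have dA0: "d A \<ge> 0" "d B \<ge> 0" using dpos AB by auto
  have "d A * d B > 0" using det cpos by (smt (verit) zero_less_power)
  then have dA: "d A > 0" using dA0 by (metis mult_eq_0_iff order_le_less)
  define p where "p = sqrt (d A)"
  define q where "q = c / p"
  have p: "p > 0" "p * p = d A" using dA by (auto simp: p_def)
  have pq: "p * q = c" "q * q = c\<^sup>2 / d A" using p by (auto simp: q_def power2_eq_square field_simps)
  define u where "u z = complex_of_real (if z = A then p else if z = B then q else 0)" for z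
  define d' where "d' z = (if z = A then 0 else if z = B then d B - c\<^sup>2 / d A else d z)" for z
  have d'pos: "\<forall>x\<in>basis n. d' x \<ge> 0"
  proof -
    have "c\<^sup>2 / d A \<le> d B" using det dA by (simp add: divide_le_eq mult.commute)
    then show ?thesis using dpos by (auto simp: d'_def)
  qed
  have dec: "M z x = complex_of_real (if z = x then d' x else 0) + u z * u x" if "z \<in> basis n" "x \<in> basis n" for z x
  proof -
    have "M z x = complex_of_real (mfun A B d c z x)" using Mdef that by blast
    moreover have "mfun A B d c z x = (if z = x then d' x else 0) + (if z = A then p else if z = B then q else 0) * (if x = A then p else if x = B then q else 0)"
      using AB(3) p pq unfolding mfun_def d'_def
      by (cases "z = A"; cases "z = B"; cases "x = A"; cases "x = B") (auto simp: field_simps mult.commute)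
    ultimately show ?thesis unfolding u_def by simp
  qed
  have "mtrace n (mmult n U M) = (\<Sum>x\<in>basis n. \<Sum>z\<in>basis n. (if z = x then U x x * complex_of_real (d' x) else 0) + u x * (U x z * u z))"
    unfolding trace_expand using dec by (intro sum.cong refl) (auto simp: algebra_simps)
  also have "\<dots> = (\<Sum>x\<in>basis n. U x x * complex_of_real (d' x) + u x * mulvec n U u x)"
    by (simp add: sum.distrib mulvec_def sum_distrib_left)
  finally have tr: "mtrace n (mmult n U M) = (\<Sum>x\<in>basis n. U x x * complex_of_real (d' x)) + (\<Sum>x\<in>basis n. u x * mulvec n U u x)"
    by (simp add: sum.distrib)
  have b1: "cmod (\<Sum>x\<in>basis n. U x x * complex_of_real (d' x)) \<le> (\<Sum>x\<in>basis n. d' x)"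
  proof -
    have "cmod (\<Sum>x\<in>basis n. U x x * complex_of_real (d' x)) \<le> (\<Sum>x\<in>basis n. cmod (U x x * complex_of_real (d' x)))"
      by (rule norm_sum)
    also have "\<dots> \<le> (\<Sum>x\<in>basis n. d' x)"
    proof (intro sum_mono)
      fix x assume x: "x \<in> basis n"
      have "cmod (U x x) \<le> 1" using unitary_entry[OF U x x] .
      then show "cmod (U x x * complex_of_real (d' x)) \<le> d' x"
        using d'pos x by (simp add: norm_mult mult_left_le_one_le)
    qed
    finally show ?thesis .
  qed
  have b2: "cmod (\<Sum>x\<in>basis n. u x * mulvec n U u x) \<le> (\<Sum>x\<in>basis n. (cmod (u x))\<^sup>2)"
  proof -
    have "cmod (\<Sum>x\<in>basis n. u x * mulvec n U u x) \<le> (\<Sum>x\<in>basis n. cmod (u x) * cmod (mulvec n U u x))"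
      by (rule order_trans[OF norm_sum]) (simp add: norm_mult)
    also have "\<dots> \<le> (\<Sum>x\<in>basis n. ((cmod (u x))\<^sup>2 + (cmod (mulvec n U u x))\<^sup>2) / 2)"
      by (intro sum_mono amgm)
    also have "\<dots> = (\<Sum>x\<in>basis n. (cmod (u x))\<^sup>2)"
      using unitary_norm[OF U, of u] by (simp add: sum.distrib sum_divide_distrib[symmetric])
    finally show ?thesis .
  qed
  have su: "(\<Sum>x\<in>basis n. (cmod (u x))\<^sup>2) = d A + c\<^sup>2 / d A"
  proof -
    have "(\<Sum>x\<in>basis n. (cmod (u x))\<^sup>2) = (cmod (u A))\<^sup>2 + (cmod (u B))\<^sup>2"
      by (rule sum_two) (use AB in \<open>auto simp: u_def\<close>)
    then show ?thesis using AB(3) p pq by (simp add: u_def power2_eq_square)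
  qed
  have sd: "(\<Sum>x\<in>basis n. d' x) = 1 - d A - c\<^sup>2 / d A"
  proof -
    have "(\<Sum>x\<in>basis n. d' x) = (\<Sum>x\<in>basis n. d x - ((if x = A then d A else 0) + (if x = B then c\<^sup>2 / d A else 0)))"
      using AB(3) by (intro sum.cong refl) (auto simp: d'_def)
    also have "\<dots> = 1 - d A - c\<^sup>2 / d A"
      using AB dsum by (simp add: sum_subtractf sum.distrib)
    finally show ?thesis .
  qed
  have "cmod (mtrace n (mmult n U M)) \<le> (\<Sum>x\<in>basis n. d' x) + (\<Sum>x\<in>basis n. (cmod (u x))\<^sup>2)"
    unfolding tr by (rule order_trans[OF norm_triangle_ineq add_mono[OF b1 b2]])
  then show ?thesis unfolding su sd by simp
qed

end

context tnset begin

lemma lower: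
  assumes det: "d A * d B < c\<^sup>2"
  shows "\<exists>U. unitary n U \<and> cmod (mtrace n (mmult n U M)) > 1"
proof -
  have dA0: "d A \<ge> 0" "d B \<ge> 0" using dpos AB by auto
  obtain wA wB where f: "d A * wA\<^sup>2 + 2 * c * wA * wB + d B * wB\<^sup>2 < 0" and N: "wA\<^sup>2 + wB\<^sup>2 > 0"
  proof (cases "d A > 0")
    case True
    have "d A * c\<^sup>2 + 2 * c * c * (- d A) + d B * (- d A)\<^sup>2 = d A * (d A * d B - c\<^sup>2)"
      by (simp add: power2_eq_square algebra_simps)
    also have "\<dots> < 0" using True det by (simp add: mult_pos_neg)
    finally show ?thesis using that[of c "- d A"] cpos by (simp add: add_pos_nonneg)
  next
    case False
    then have "d A = 0" using dA0 by simp
    moreover have "2 * c * (- (d B + 1)) * c + d B * c\<^sup>2 < 0"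
    proof -
      have "2 * c * (- (d B + 1)) * c + d B * c\<^sup>2 = - (c\<^sup>2 * (d B + 2))" by (simp add: power2_eq_square algebra_simps)
      also have "\<dots> < 0" using cpos dA0 by simp
      finally show ?thesis .
    qed
    ultimately show ?thesis using that[of "- (d B + 1)" c] cpos by (simp add: add_nonneg_pos)
  qed
  define Nw where "Nw = wA\<^sup>2 + wB\<^sup>2"
  define k where "k = 2 / Nw"
  define wv where "wv z = (if z = A then wA else if z = B then wB else 0)" for z
  define Ur where "Ur x y = (if x = y then 1 else 0) - k * wv x * wv y" for x y
  define U where "U x y = complex_of_real (Ur x y)" for x y
  have sw: "(\<Sum>z\<in>basis n. wv z * wv z) = Nw"
  proof -
    have "(\<Sum>z\<in>basis n. wv z * wv z) = wv A * wv A + wv B * wv B"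
      by (rule sum_two) (use AB in \<open>auto simp: wv_def\<close>)
    then show ?thesis using AB(3) by (simp add: wv_def Nw_def power2_eq_square)
  qed
  have Np: "Nw > 0" using N by (simp add: Nw_def)
  have kN: "k * k * Nw = 2 * k" using Np unfolding k_def by (simp add: field_simps)
  have unit: "unitary n U"
    unfolding unitary_def meq_def
  proof (intro ballI)
    fix x y assume x: "x \<in> basis n" and y: "y \<in> basis n"
    have "(\<Sum>z\<in>basis n. Ur z x * Ur z y) = (\<Sum>z\<in>basis n. (if z = x then (if x = y then 1 else 0) else 0)
        - (if z = y then k * wv x * wv y else 0) - (if z = x then k * wv x * wv y else 0) + k * k * wv x * wv y * (wv z * wv z))"
      by (intro sum.cong refl) (auto simp: Ur_def algebra_simps)
    also have "\<dots> = (if x = y then 1 else 0) - k * wv x * wv y - k * wv x * wv y + k * k * wv x * wv y * Nw"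
      using x y by (simp add: sum.distrib sum_subtractf sum_distrib_left[symmetric] sw)
    also have "\<dots> = (if x = y then 1 else 0) - 2 * k * (wv x * wv y) + (k * k * Nw) * (wv x * wv y)"
      by (simp add: algebra_simps)
    also have "\<dots> = (if x = y then 1 else 0)" unfolding kN by simp
    finally have r: "(\<Sum>z\<in>basis n. Ur z x * Ur z y) = (if x = y then 1 else 0)" .
    have "mmult n (adj U) U x y = complex_of_real (\<Sum>z\<in>basis n. Ur z x * Ur z y)"
      unfolding mmult_def adj_def U_def by (simp add: of_real_sum)
    then show "mmult n (adj U) U x y = ident x y" unfolding r by (simp add: ident_def)
  qed
  have inner: "(\<Sum>z\<in>basis n. Ur x z * mfun A B d c z x) = mfun A B d c x x - k * wv x * (wv x * d x + c * ((if x = B then wA else 0) + (if x = A then wB else 0)))"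
    if x: "x \<in> basis n" for x
  proof -
    have "(\<Sum>z\<in>basis n. Ur x z * mfun A B d c z x) = (\<Sum>z\<in>basis n. (if z = x then mfun A B d c x x else 0)
       - k * wv x * ((if z = x then wv x * d x else 0) + c * ((if z = A then (if x = B then wA else 0) else 0) + (if z = B then (if x = A then wB else 0) else 0))))"
      using AB(3) by (intro sum.cong refl) (auto simp: Ur_def mfun_def wv_def algebra_simps)
    also have "\<dots> = mfun A B d c x x - k * wv x * (wv x * d x + c * ((if x = B then wA else 0) + (if x = A then wB else 0)))"
      using x AB by (simp add: sum_subtractf sum.distrib sum_distrib_left[symmetric])
    finally show ?thesis .
  qed
  have sf: "(\<Sum>x\<in>basis n. wv x * (wv x * d x + c * ((if x = B then wA else 0) + (if x = A then wB else 0))))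
      = d A * wA\<^sup>2 + 2 * c * wA * wB + d B * wB\<^sup>2"
  proof -
    have "(\<Sum>x\<in>basis n. wv x * (wv x * d x + c * ((if x = B then wA else 0) + (if x = A then wB else 0))))
        = wv A * (wv A * d A + c * ((if A = B then wA else 0) + (if A = A then wB else 0))) + wv B * (wv B * d B + c * ((if B = B then wA else 0) + (if B = A then wB else 0)))"
      by (rule sum_two) (use AB in \<open>auto simp: wv_def\<close>)
    then show ?thesis using AB(3) by (simp add: wv_def power2_eq_square algebra_simps)
  qed
  have sdiag: "(\<Sum>x\<in>basis n. mfun A B d c x x) = 1"
  proof -
    have "(\<Sum>x\<in>basis n. mfun A B d c x x) = (\<Sum>x\<in>basis n. d x)"
      using AB(3) by (intro sum.cong refl) (auto simp: mfun_def)
    then show ?thesis using dsum by simp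
  qed
  have "mtrace n (mmult n U M) = complex_of_real (\<Sum>x\<in>basis n. \<Sum>z\<in>basis n. Ur x z * mfun A B d c z x)"
  proof -
    have "mtrace n (mmult n U M) = (\<Sum>x\<in>basis n. \<Sum>z\<in>basis n. U x z * M z x)" by (rule trace_expand)
    also have "\<dots> = (\<Sum>x\<in>basis n. \<Sum>z\<in>basis n. complex_of_real (Ur x z * mfun A B d c z x))"
      using Mdef by (intro sum.cong refl) (simp add: U_def)
    finally show ?thesis by (simp add: of_real_sum)
  qed
  also have "(\<Sum>x\<in>basis n. \<Sum>z\<in>basis n. Ur x z * mfun A B d c z x) = 1 - k * (d A * wA\<^sup>2 + 2 * c * wA * wB + d B * wB\<^sup>2)"
    using inner sdiag sf by (simp add: sum_subtractf sum_distrib_left[symmetric] mult.assoc)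
  finally have tr: "mtrace n (mmult n U M) = complex_of_real (1 - k * (d A * wA\<^sup>2 + 2 * c * wA * wB + d B * wB\<^sup>2))" .
  have "cmod (mtrace n (mmult n U M)) = \<bar>1 - k * (d A * wA\<^sup>2 + 2 * c * wA * wB + d B * wB\<^sup>2)\<bar>"
    unfolding tr norm_of_real ..
  moreover have "k > 0" using Np by (simp add: k_def)
  moreover have "k * (d A * wA\<^sup>2 + 2 * c * wA * wB + d B * wB\<^sup>2) < 0"
    using \<open>k > 0\<close> f by (rule mult_pos_neg)
  ultimately have "cmod (mtrace n (mmult n U M)) > 1" by linarith
  then show ?thesis using unit by blast
qed

lemma trace_norm_iff: "trace_norm n M = 1 \<longleftrightarrow> c\<^sup>2 \<le> d A * d B"
proof
  assume t: "trace_norm n M = 1"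
  show "c\<^sup>2 \<le> d A * d B"
  proof (rule ccontr)
    assume "\<not> c\<^sup>2 \<le> d A * d B"
    then obtain U where "unitary n U" "cmod (mtrace n (mmult n U M)) > 1" using lower by force
    moreover have "cmod (mtrace n (mmult n U M)) \<le> trace_norm n M"
      unfolding trace_norm_def SS_def[symmetric] using SS_bdd \<open>unitary n U\<close>
      by (intro cSup_upper) (auto simp: SS_def)
    ultimately show False using t by simp
  qed
next
  assume det: "c\<^sup>2 \<le> d A * d B"
  have "trace_norm n M \<le> 1"
    unfolding trace_norm_def SS_def[symmetric]
    using one_in_SS upper[OF det] by (intro cSup_least) (auto simp: SS_def)
  then show "trace_norm n M = 1" using tn_ge1 by simp
qed

end

theorem propositionS8:
  fixes n :: nat and \<alpha> \<beta> :: real and \<gamma> :: "nat \<Rightarrow> real"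
  assumes n2: "n \<ge> 2"
    and ab_pos: "\<alpha> > 0" "\<beta> > 0"
    and norm: "\<alpha>\<^sup>2 + \<beta>\<^sup>2 = 1"
    and r_lt1: "\<alpha> / \<beta> < 1"
    and gam: "\<forall>i<n. 0 \<le> \<gamma> i \<and> \<gamma> i < 1"
  defines "\<rho> \<equiv> damp n \<gamma> (proj (psi n \<alpha> \<beta>))"
    and "r \<equiv> \<alpha> / \<beta>"
    and "P \<equiv> (\<Prod>i<n. \<gamma> i)"
    and "Q \<equiv> (\<Prod>i<n. 1 - \<gamma> i)"
  shows
    "\<rho> {} {} = complex_of_real (\<alpha>\<^sup>2 + \<beta>\<^sup>2 * P)
     \<and> \<rho> {..<n} {..<n} = complex_of_real (\<beta>\<^sup>2 * Q)
     \<and> \<rho> {} {..<n} = complex_of_real (\<alpha> * \<beta> * sqrt Q)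
     \<and> (\<rho> \<in> stab_poly n \<longleftrightarrow>
          Re (\<rho> {} {}) \<ge> Re (\<rho> {} {..<n}) \<and> Re (\<rho> {..<n} {..<n}) \<ge> Re (\<rho> {} {..<n}))
     \<and> (Re (\<rho> {..<n} {..<n}) = Re (\<rho> {} {..<n}) \<longleftrightarrow> Q = r\<^sup>2)
     \<and> (Q = r\<^sup>2 \<longrightarrow> Re (\<rho> {} {}) \<ge> Re (\<rho> {} {..<n}))
     \<and> (\<forall>A. A \<subseteq> {..<n} \<and> A \<noteq> {} \<and> A \<noteq> {..<n} \<longrightarrow>
          (let M = ptrans A \<rho>; a = A; b = {..<n} - A in
             M a a * M b b - M a b * M b a
               = complex_of_real (\<beta>\<^sup>2 * Q * (\<beta>\<^sup>2 * P - \<alpha>\<^sup>2)))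
          \<and> (negativity n A \<rho> = 0 \<longleftrightarrow> P \<ge> r\<^sup>2))
     \<and> (\<lambda>g i. 1 - g i) ` {g :: nat \<Rightarrow> real. (\<Prod>i<n. g i) = r\<^sup>2}
          = {g. (\<Prod>i<n. 1 - g i) = r\<^sup>2}
     \<and> (\<lambda>g i. 1 - g i) ` {g :: nat \<Rightarrow> real. (\<Prod>i<n. 1 - g i) = r\<^sup>2}
          = {g. (\<Prod>i<n. g i) = r\<^sup>2}
     \<and> (P = r\<^sup>2 \<longleftrightarrow> root n P = r powr (2 / real n))
     \<and> (Q = r\<^sup>2 \<longleftrightarrow> 1 - root n Q = 1 - r powr (2 / real n))
     \<and> r powr (2 / real n) + (1 - r powr (2 / real n)) = 1"
proof -
  have n1: "n \<ge> 1" using n2 by simp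
  have g: "\<forall>i<n. 0 \<le> \<gamma> i \<and> \<gamma> i \<le> 1" using gam by auto
  have Qpos: "Q > 0" unfolding Q_def using gam by (intro prod_pos) auto
  have Pnn: "P \<ge> 0" unfolding P_def using gam by (intro prod_nonneg) auto
  have a0: "\<alpha> > 0" and b0: "\<beta> > 0" using ab_pos by auto
  have r0: "r > 0" unfolding r_def using a0 b0 by simp
  have "0 \<in> {..<n}" using n1 by simp
  then have ne: "{} \<noteq> {..<n}" by blast
  have eb: "{} \<in> basis n" "{..<n} \<in> basis n" by (auto simp: basis_def)
  have mmQ: "mm n \<gamma> {..<n} = sqrt Q" unfolding Q_def by (rule mm_all)
  have prE: "pr n \<gamma> {} = P" unfolding pr_def P_def by simp
  have prA: "pr n \<gamma> {..<n} = Q" unfolding pr_def Q_def by (rule prod.cong) auto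
  define c where "c = \<alpha> * \<beta> * sqrt Q"
  have cpos: "c > 0" unfolding c_def using a0 b0 Qpos by simp
  have rho: "\<rho> x y = complex_of_real (rf n \<alpha> \<beta> \<gamma> x y)" if "x \<in> basis n" "y \<in> basis n" for x y
    unfolding \<rho>_def by (rule rho_formula[OF n1 g that])
  have rf00: "rf n \<alpha> \<beta> \<gamma> {} {} = \<alpha>\<^sup>2 + \<beta>\<^sup>2 * P" using ne by (simp add: rf_def prE)
  have rf11: "rf n \<alpha> \<beta> \<gamma> {..<n} {..<n} = \<beta>\<^sup>2 * Q" using ne by (simp add: rf_def prA)
  have rf01: "rf n \<alpha> \<beta> \<gamma> {} {..<n} = \<alpha> * \<beta> * sqrt Q" using ne by (simp add: rf_def mmQ)
  have r00: "\<rho> {} {} = complex_of_real (\<alpha>\<^sup>2 + \<beta>\<^sup>2 * P)" using rho[OF eb(1) eb(1)] rf00 by simp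
  have r11: "\<rho> {..<n} {..<n} = complex_of_real (\<beta>\<^sup>2 * Q)" using rho[OF eb(2) eb(2)] rf11 by simp
  have r01: "\<rho> {} {..<n} = complex_of_real (\<alpha> * \<beta> * sqrt Q)" using rho[OF eb(1) eb(2)] rf01 by simp
  have stab: "(\<rho> \<in> stab_poly n \<longleftrightarrow>
          Re (\<rho> {} {}) \<ge> Re (\<rho> {} {..<n}) \<and> Re (\<rho> {..<n} {..<n}) \<ge> Re (\<rho> {} {..<n}))"
  proof
    assume "\<rho> \<in> stab_poly n" then show "Re (\<rho> {} {}) \<ge> Re (\<rho> {} {..<n}) \<and> Re (\<rho> {..<n} {..<n}) \<ge> Re (\<rho> {} {..<n})"
      by (rule stab_poly_necessary)
  next
    assume h: "Re (\<rho> {} {}) \<ge> Re (\<rho> {} {..<n}) \<and> Re (\<rho> {..<n} {..<n}) \<ge> Re (\<rho> {} {..<n})"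
    have "\<alpha> * \<beta> * mm n \<gamma> {..<n} \<ge> 0" unfolding mmQ using a0 b0 Qpos by simp
    moreover have "rf n \<alpha> \<beta> \<gamma> {} {} \<ge> \<alpha> * \<beta> * mm n \<gamma> {..<n}"
      using h unfolding r00 r01 rf00 mmQ by simp
    moreover have "rf n \<alpha> \<beta> \<gamma> {..<n} {..<n} \<ge> \<alpha> * \<beta> * mm n \<gamma> {..<n}"
      using h unfolding r11 r01 rf11 mmQ by simp
    ultimately show "\<rho> \<in> stab_poly n" unfolding \<rho>_def by (rule sufficiency[OF n1 g norm])
  qed
  have sq: "sqrt Q > 0" using Qpos by simp
  have Qsq: "Q = (sqrt Q)\<^sup>2" using Qpos by simp
  have facet: "(Re (\<rho> {..<n} {..<n}) = Re (\<rho> {} {..<n}) \<longleftrightarrow> Q = r\<^sup>2)"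
  proof -
    have "Re (\<rho> {..<n} {..<n}) = Re (\<rho> {} {..<n}) \<longleftrightarrow> \<beta>\<^sup>2 * Q = \<alpha> * \<beta> * sqrt Q" unfolding r11 r01 by simp
    also have "\<dots> \<longleftrightarrow> \<beta> * sqrt Q = \<alpha>"
    proof -
      have "\<beta>\<^sup>2 * Q = (\<beta> * sqrt Q) * (\<beta> * sqrt Q)" using Qsq by (simp add: power2_eq_square algebra_simps)
      moreover have "\<alpha> * \<beta> * sqrt Q = \<alpha> * (\<beta> * sqrt Q)" by simp
      ultimately show ?thesis using b0 sq by auto
    qed
    also have "\<dots> \<longleftrightarrow> sqrt Q = r" unfolding r_def using b0 by (auto simp: field_simps)
    also have "\<dots> \<longleftrightarrow> Q = r\<^sup>2" using Qpos r0 by (metis less_imp_le real_sqrt_pow2 real_sqrt_unique)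
    finally show ?thesis .
  qed
  have auto0: "(Q = r\<^sup>2 \<longrightarrow> Re (\<rho> {} {}) \<ge> Re (\<rho> {} {..<n}))"
  proof
    assume "Q = r\<^sup>2"
    then have "sqrt Q = r" using r0 by simp
    then have "\<alpha> * \<beta> * sqrt Q = \<alpha>\<^sup>2" unfolding r_def using b0 by (simp add: power2_eq_square)
    then show "Re (\<rho> {} {}) \<ge> Re (\<rho> {} {..<n})" unfolding r00 r01 using Pnn by simp
  qed
  have Bsum: "(\<Sum>x\<in>basis n. rf n \<alpha> \<beta> \<gamma> x x) = 1"
  proof -
    have "(\<Sum>x\<in>basis n. rf n \<alpha> \<beta> \<gamma> x x) = (\<Sum>x\<in>basis n. \<beta>\<^sup>2 * pr n \<gamma> x + (if x = {} then \<alpha>\<^sup>2 else 0))"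
      using ne by (intro sum.cong refl) (auto simp: rf_def)
    also have "\<dots> = \<beta>\<^sup>2 + \<alpha>\<^sup>2" using eb by (simp add: sum.distrib sum_distrib_left[symmetric] sum_pr)
    finally show ?thesis using norm by simp
  qed
  have cut: "(let M = ptrans A \<rho>; a = A; b = {..<n} - A in
             M a a * M b b - M a b * M b a
               = complex_of_real (\<beta>\<^sup>2 * Q * (\<beta>\<^sup>2 * P - \<alpha>\<^sup>2)))
          \<and> (negativity n A \<rho> = 0 \<longleftrightarrow> P \<ge> r\<^sup>2)"
    if A: "A \<subseteq> {..<n}" "A \<noteq> {}" "A \<noteq> {..<n}" for A
  proof -
    define B where "B = {..<n} - A"
    define d where "d x = rf n \<alpha> \<beta> \<gamma> x x" for x
    have AB: "A \<in> basis n" "B \<in> basis n" "A \<noteq> B" using A by (auto simp: basis_def B_def)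
    have Bne: "B \<noteq> {}" using A by (auto simp: B_def)
    have Mdef: "\<forall>x\<in>basis n. \<forall>y\<in>basis n. ptrans A \<rho> x y = complex_of_real (mfun A B d c x y)"
    proof (intro ballI)
      fix x y assume x: "x \<in> basis n" and y: "y \<in> basis n"
      define x' where "x' = (x - A) \<union> (y \<inter> A)"
      define y' where "y' = (y - A) \<union> (x \<inter> A)"
      have xb: "x' \<in> basis n" "y' \<in> basis n" using x y A by (auto simp: basis_def x'_def y'_def)
      have e1: "x' = y' \<longleftrightarrow> x = y" unfolding x'_def y'_def by blast
      have e2: "x = y \<Longrightarrow> x' = x" unfolding x'_def by blast
      have e3: "(x' = {} \<and> y' = {..<n}) \<longleftrightarrow> (x = A \<and> y = B)"
        using x y A unfolding x'_def y'_def B_def basis_def by blast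
      have e4: "(x' = {..<n} \<and> y' = {}) \<longleftrightarrow> (x = B \<and> y = A)"
        using x y A unfolding x'_def y'_def B_def basis_def by blast
      have "ptrans A \<rho> x y = \<rho> x' y'" unfolding ptrans_def x'_def y'_def ..
      also have "\<dots> = complex_of_real (rf n \<alpha> \<beta> \<gamma> x' y')" by (rule rho[OF xb])
      also have "rf n \<alpha> \<beta> \<gamma> x' y' = mfun A B d c x y"
      proof (cases "x = y")
        case True
        then have "\<not> ((x = A \<and> y = B) \<or> (x = B \<and> y = A))" using AB(3) by auto
        then show ?thesis using True e1 e2 e3 e4 unfolding rf_def mfun_def d_def by auto
      next
        case False
        then show ?thesis using e1 e3 e4 unfolding rf_def mfun_def d_def c_def mmQ by auto
      qed
      finally show "ptrans A \<rho> x y = complex_of_real (mfun A B d c x y)" .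
    qed
    interpret T: tnset n A B d c "ptrans A \<rho>"
    proof
      show "A \<in> basis n" "B \<in> basis n" "A \<noteq> B" by (rule AB)+
      show "\<forall>x\<in>basis n. 0 \<le> d x"
      proof
        fix x assume "x \<in> basis n"
        have "d x = \<beta>\<^sup>2 * pr n \<gamma> x + (if x = {} then \<alpha>\<^sup>2 else 0)" using ne unfolding d_def rf_def by auto
        then show "0 \<le> d x" using pr_nonneg[OF g, of x] by simp
      qed
      show "(\<Sum>x\<in>basis n. d x) = 1" unfolding d_def by (rule Bsum)
      show "c > 0" by (rule cpos)
      show "\<forall>x\<in>basis n. \<forall>y\<in>basis n. ptrans A \<rho> x y = complex_of_real (mfun A B d c x y)" by (rule Mdef)
    qed
    have dA: "d A = \<beta>\<^sup>2 * pr n \<gamma> A" using A(2) unfolding d_def rf_def by simp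
    have dB: "d B = \<beta>\<^sup>2 * pr n \<gamma> B" using Bne unfolding d_def rf_def by simp
    have prAB: "pr n \<gamma> A * pr n \<gamma> B = P * Q"
      unfolding pr_def P_def Q_def prod.distrib[symmetric] by (rule prod.cong) (auto simp: B_def)
    have det: "d A * d B - c\<^sup>2 = \<beta>\<^sup>2 * Q * (\<beta>\<^sup>2 * P - \<alpha>\<^sup>2)"
    proof -
      have "d A * d B = \<beta>\<^sup>2 * \<beta>\<^sup>2 * (P * Q)" unfolding dA dB prAB[symmetric] by (simp add: algebra_simps)
      moreover have "c\<^sup>2 = \<alpha>\<^sup>2 * \<beta>\<^sup>2 * Q" unfolding c_def using Qpos by (simp add: power_mult_distrib)
      ultimately show ?thesis by (simp add: algebra_simps)
    qed
    have MAA: "ptrans A \<rho> A A = complex_of_real (d A)" using Mdef AB by (simp add: mfun_def)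
    have MBB: "ptrans A \<rho> B B = complex_of_real (d B)" using Mdef AB by (simp add: mfun_def)
    have MAB: "ptrans A \<rho> A B = complex_of_real c" using Mdef AB by (simp add: mfun_def)
    have MBA: "ptrans A \<rho> B A = complex_of_real c" using Mdef AB by (simp add: mfun_def)
    have part1: "(let M = ptrans A \<rho>; a = A; b = {..<n} - A in
             M a a * M b b - M a b * M b a
               = complex_of_real (\<beta>\<^sup>2 * Q * (\<beta>\<^sup>2 * P - \<alpha>\<^sup>2)))"
      unfolding Let_def B_def[symmetric] MAA MBB MAB MBA det[symmetric]
      by (simp add: power2_eq_square)
    have "negativity n A \<rho> = 0 \<longleftrightarrow> trace_norm n (ptrans A \<rho>) = 1" by (simp add: negativity_def)
    also have "\<dots> \<longleftrightarrow> c\<^sup>2 \<le> d A * d B" by (rule T.trace_norm_iff)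
    also have "\<dots> \<longleftrightarrow> 0 \<le> \<beta>\<^sup>2 * Q * (\<beta>\<^sup>2 * P - \<alpha>\<^sup>2)" using det by linarith
    also have "\<dots> \<longleftrightarrow> \<alpha>\<^sup>2 \<le> \<beta>\<^sup>2 * P"
    proof -
      have "\<beta>\<^sup>2 * Q > 0" using b0 Qpos by simp
      then show ?thesis using mult_le_cancel_left_pos[of "\<beta>\<^sup>2 * Q" 0 "\<beta>\<^sup>2 * P - \<alpha>\<^sup>2"] by simp
    qed
    also have "\<dots> \<longleftrightarrow> P \<ge> r\<^sup>2" unfolding r_def using b0 by (simp add: power_divide divide_le_eq mult.commute)
    finally show ?thesis using part1 by simp
  qed
  have inv1: "(\<lambda>g i. 1 - g i) ` {g :: nat \<Rightarrow> real. (\<Prod>i<n. g i) = r\<^sup>2} = {g. (\<Prod>i<n. 1 - g i) = r\<^sup>2}"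
  proof
    show "(\<lambda>g i. 1 - g i) ` {g :: nat \<Rightarrow> real. (\<Prod>i<n. g i) = r\<^sup>2} \<subseteq> {g. (\<Prod>i<n. 1 - g i) = r\<^sup>2}" by auto
    show "{g. (\<Prod>i<n. 1 - g i) = r\<^sup>2} \<subseteq> (\<lambda>g i. 1 - g i) ` {g :: nat \<Rightarrow> real. (\<Prod>i<n. g i) = r\<^sup>2}"
    proof
      fix h :: "nat \<Rightarrow> real" assume h: "h \<in> {g. (\<Prod>i<n. 1 - g i) = r\<^sup>2}"
      show "h \<in> (\<lambda>g i. 1 - g i) ` {g :: nat \<Rightarrow> real. (\<Prod>i<n. g i) = r\<^sup>2}"
        by (rule image_eqI[where x = "\<lambda>i. 1 - h i"]) (use h in auto)
    qed
  qed
  have inv2: "(\<lambda>g i. 1 - g i) ` {g :: nat \<Rightarrow> real. (\<Prod>i<n. 1 - g i) = r\<^sup>2} = {g. (\<Prod>i<n. g i) = r\<^sup>2}"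
  proof
    show "(\<lambda>g i. 1 - g i) ` {g :: nat \<Rightarrow> real. (\<Prod>i<n. 1 - g i) = r\<^sup>2} \<subseteq> {g. (\<Prod>i<n. g i) = r\<^sup>2}" by auto
    show "{g. (\<Prod>i<n. g i) = r\<^sup>2} \<subseteq> (\<lambda>g i. 1 - g i) ` {g :: nat \<Rightarrow> real. (\<Prod>i<n. 1 - g i) = r\<^sup>2}"
    proof
      fix h :: "nat \<Rightarrow> real" assume h: "h \<in> {g. (\<Prod>i<n. g i) = r\<^sup>2}"
      show "h \<in> (\<lambda>g i. 1 - g i) ` {g :: nat \<Rightarrow> real. (\<Prod>i<n. 1 - g i) = r\<^sup>2}"
        by (rule image_eqI[where x = "\<lambda>i. 1 - h i"]) (use h in auto)
    qed
  qed
  have npos: "0 < n" using n1 by simp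
  have rp: "r powr (2 / real n) = root n (r\<^sup>2)"
  proof -
    have "root n (r\<^sup>2) = (r\<^sup>2) powr (1 / real n)" using npos by (simp add: root_powr_inverse)
    also have "(r\<^sup>2) powr (1 / real n) = r powr (2 / real n)"
    proof -
      have e: "r\<^sup>2 = r powr 2" using r0 by simp
      show ?thesis unfolding e powr_powr by simp
    qed
    finally show ?thesis by simp
  qed
  have rt1: "(P = r\<^sup>2 \<longleftrightarrow> root n P = r powr (2 / real n))"
    unfolding rp using npos by simp
  have rt2: "(Q = r\<^sup>2 \<longleftrightarrow> 1 - root n Q = 1 - r powr (2 / real n))"
    unfolding rp using npos by simp
  show ?thesis
    using r00 r11 r01 stab facet auto0 cut inv1 inv2 rt1 rt2 by simp
qed

end
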